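(* Let $h\in\mathfrak M$ and $\delta\in\{\ast,0,\gamma^{(H)}\}$ with $t\in\mathbb T_\delta$. Let $\mathcal A_h\oplus\mathcal A_{\mu(h)}$ be a non-degenerate $\mathcal K_h\oplus\mathcal K_{\mu(h)}$-submodule of $\mathcal J_h\oplus\mathcal J_{\mu(h)}$, where $\mathcal A_h$ is a $\mathcal K_h$-subspace of $\mathcal J_h$ and $\mathcal A_{\mu(h)}$ is a $\mathcal K_{\mu(h)}$-subspace of $\mathcal J_{\mu(h)}$ with $\dim_{\mathcal K_h}\mathcal A_h=\dim_{\mathcal K_{\mu(h)}}\mathcal A_{\mu(h)}=r\ge2$. Then the number of non-trivial isotropic elements in $\mathcal A_h\oplus\mathcal A_{\mu(h)}$ is $(q^{(r-1)d_h}-1)(q^{rd_h}-1)$.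
   Context: Standing setup. Let $q$ be a power of a prime $p$, $n\ge1$ with $\gcd(n,q)=1$, $t\ge2$. $\mathcal R_n^{(q)}=\mathbb F_q[X]/\langle X^n-1\rangle\subseteq\mathcal R_n^{(q^t)}=\mathbb F_{q^t}[X]/\langle X^n-1\rangle$. $C^{(q)}_\ell=\{\ell q^j\bmod n\}$; $\ell_0=0,\dots,\ell_{s-1}$ representatives of the $q$-cyclotomic cosets mod $n$; $d_i=|C^{(q)}_{\ell_i}|$; $f_i(X)=\prod_{k\in C^{(q)}_{\ell_i}}(X-\eta^k)$ for a primitive $n$th root of unity $\eta$. $\mathcal K_i$ is the ideal of $\mathcal R_n^{(q)}$ generated by $(X^n-1)/f_i$ (a field $\cong\mathbb F_{q^{d_i}}$), $\mathcal J_i$ the ideal of $\mathcal R_n^{(q^t)}$ generated by $(X^n-1)/f_i$ (a $t$-dimensional $\mathcal K_i$-space). $\mu$ is the involution of $\{0,\dots,s-1\}$ with $C^{(q)}_{-\ell_i}=C^{(q)}_{\ell_{\mu(i)}}$, and $\mathfrak M$ contains exactly one element of each 2-cycle of $\mu$. $\tau_{q^u,v}(\sum a_iX^i)=\sum a_i^{q^u}X^{vi}$. Forms: $[a,b]_0=\sum_{w=0}^{t-1}\tau_{q^w,1}(a\tau_{1,-1}(b))$ (any $t\ge2$); $[a,b]_\ast=\sum_{u=0}^{t-1}\tau_{q^u,1}(a\sum_{w=1}^{t-1}\tau_{q^w,-1}(b))$ ($t\not\equiv1\pmod p$); for $t$ even, $t=2^em$ ($m$ odd), nonzero $\gamma\in\mathbb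 F_{q^{2^e}}$ with $\gamma+\gamma^{q^{2^{e-1}}}=0$, $[a,b]_\gamma=\sum_{w=0}^{t-1}\tau_{q^w,1}(\gamma a\tau_{q^{t/2},-1}(b))$. $\mathbb T_\ast=\{t\ge2:t\not\equiv1\pmod p\}$, $\mathbb T_0=\{t\ge2\}$, $\mathbb T_{\gamma^{(H)}}=\{t\ge2\text{ even}\}$. Module setup. Fix $h\in\mathfrak M$. $\mathcal J_h\oplus\mathcal J_{\mu(h)}$ is a module over the ring $\mathcal K_h\oplus\mathcal K_{\mu(h)}$ via $(u+v)(a+b)=ua+vb$. For $\delta\in\{\ast,0\}$ use $[\cdot,\cdot]_\delta$ restricted to $\mathcal J_h\oplus\mathcal J_{\mu(h)}$; for $\delta=\gamma^{(H)}$ fix $0\ne\vartheta\in\mathcal K_h$, set $\chi=\vartheta-\tau_{1,-1}(\vartheta)$ and $[x,y]_{\gamma^{(H)}}=\chi[x,y]_\gamma$. The submodule $\mathcal A_h\oplus\mathcal A_{\mu(h)}$ is non-degenerate if no nonzero element of it is $[\cdot,\cdot]_\delta$-orthogonal to all of it. A nonzero element $x$ is isotropic if $[x,x]_\delta=0$; $a+b$ ($a\in\mathcal J_h$, $b\in\mathcal J_{\mu(h)}$) is non-trivial if $a\ne0$ and $b\ne0$. *)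

theory Defs
  imports "HOL-Computational_Algebra.Computational_Algebra"
begin

text \<open>All objects live inside one ambient finite field 'b (of order q^N with t dvd N)
that contains F_{q^t} and a primitive n-th root of unity eta.\<close>

definition Fq :: "nat \<Rightarrow> 'b::field set" where
  "Fq Q = {x. x ^ Q = x}"

definition xn1 :: "nat \<Rightarrow> 'b::field poly" where
  "xn1 n = monom 1 n - 1"

text \<open>R_n^{(Q)} = F_Q[X]/<X^n-1>, canonical representatives of degree < n.\<close>
definition Rn :: "nat \<Rightarrow> nat \<Rightarrow> 'b::field poly set" where
  "Rn Q n = {a. degree a < n \<and> (\<forall>i. coeff a i \<in> Fq Q)}"

definition rmult :: "nat \<Rightarrow> 'b::field poly \<Rightarrow> 'b poly \<Rightarrow> 'b poly" where
  "rmult n a b = (a * b) mod xn1 n"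

definition tau :: "nat \<Rightarrow> nat \<Rightarrow> nat \<Rightarrow> int \<Rightarrow> 'b::field poly \<Rightarrow> 'b poly" where
  "tau q n u v a = (\<Sum>i<n. monom (coeff a i ^ (q ^ u)) (nat ((v * int i) mod int n)))"

definition cyc :: "nat \<Rightarrow> nat \<Rightarrow> int \<Rightarrow> nat set" where
  "cyc q n l = {nat ((l * int q ^ j) mod int n) | j. True}"

definition primitive_root :: "nat \<Rightarrow> 'b::field \<Rightarrow> bool" where
  "primitive_root n \<eta> \<longleftrightarrow> \<eta> ^ n = 1 \<and> (\<forall>k. 0 < k \<and> k < n \<longrightarrow> \<eta> ^ k \<noteq> 1)"

definition cyc_reps :: "nat \<Rightarrow> nat \<Rightarrow> nat list \<Rightarrow> bool" where
  "cyc_reps q n ls \<longleftrightarrow> ls \<noteq> [] \<and> ls ! 0 = 0 \<and> (\<forall>i<length ls. ls ! i < n) \<and>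
     (\<forall>i<length ls. \<forall>j<length ls. i \<noteq> j \<longrightarrow> cyc q n (int (ls ! i)) \<noteq> cyc q n (int (ls ! j))) \<and>
     (\<forall>x<n. \<exists>i<length ls. x \<in> cyc q n (int (ls ! i)))"

definition fpoly :: "nat \<Rightarrow> nat \<Rightarrow> 'b::field \<Rightarrow> nat list \<Rightarrow> nat \<Rightarrow> 'b poly" where
  "fpoly q n \<eta> ls i = (\<Prod>k\<in>cyc q n (int (ls ! i)). [:- (\<eta> ^ k), 1:])"

definition dd :: "nat \<Rightarrow> nat \<Rightarrow> nat list \<Rightarrow> nat \<Rightarrow> nat" where
  "dd q n ls i = card (cyc q n (int (ls ! i)))"

definition mu :: "nat \<Rightarrow> nat \<Rightarrow> nat list \<Rightarrow> nat \<Rightarrow> nat" where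
  "mu q n ls i = (THE j. j < length ls \<and> cyc q n (- int (ls ! i)) = cyc q n (int (ls ! j)))"

definition frakM :: "nat \<Rightarrow> nat \<Rightarrow> nat list \<Rightarrow> nat set \<Rightarrow> bool" where
  "frakM q n ls M \<longleftrightarrow> M \<subseteq> {i. i < length ls \<and> mu q n ls i \<noteq> i} \<and>
     (\<forall>i<length ls. mu q n ls i \<noteq> i \<longrightarrow> (i \<in> M \<longleftrightarrow> mu q n ls i \<notin> M))"

definition Kid :: "nat \<Rightarrow> nat \<Rightarrow> 'b::field \<Rightarrow> nat list \<Rightarrow> nat \<Rightarrow> 'b poly set" where
  "Kid q n \<eta> ls i = {rmult n c (xn1 n div fpoly q n \<eta> ls i) | c. c \<in> Rn q n}"

definition Jid :: "nat \<Rightarrow> nat \<Rightarrow> nat \<Rightarrow> 'b::field \<Rightarrow> nat list \<Rightarrow> nat \<Rightarrow> 'b poly set" where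
  "Jid q t n \<eta> ls i = {rmult n c (xn1 n div fpoly q n \<eta> ls i) | c. c \<in> Rn (q ^ t) n}"

definition form0 :: "nat \<Rightarrow> nat \<Rightarrow> nat \<Rightarrow> 'b::field poly \<Rightarrow> 'b poly \<Rightarrow> 'b poly" where
  "form0 q t n a b = (\<Sum>w<t. tau q n w 1 (rmult n a (tau q n 0 (-1) b)))"

definition formstar :: "nat \<Rightarrow> nat \<Rightarrow> nat \<Rightarrow> 'b::field poly \<Rightarrow> 'b poly \<Rightarrow> 'b poly" where
  "formstar q t n a b = (\<Sum>u<t. tau q n u 1 (rmult n a (\<Sum>w\<in>{1..<t}. tau q n w (-1) b)))"

definition formgamma :: "nat \<Rightarrow> nat \<Rightarrow> nat \<Rightarrow> 'b::field \<Rightarrow> 'b poly \<Rightarrow> 'b poly \<Rightarrow> 'b poly" where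
  "formgamma q t n \<gamma> a b = (\<Sum>w<t. tau q n w 1 (rmult n (smult \<gamma> a) (tau q n (t div 2) (-1) b)))"

definition formH :: "nat \<Rightarrow> nat \<Rightarrow> nat \<Rightarrow> 'b::field \<Rightarrow> 'b poly \<Rightarrow> 'b poly \<Rightarrow> 'b poly \<Rightarrow> 'b poly" where
  "formH q t n \<gamma> \<theta> a b = rmult n (\<theta> - tau q n 0 (-1) \<theta>) (formgamma q t n \<gamma> a b)"

datatype delta = DStar | DZero | DGammaH

definition bform :: "delta \<Rightarrow> nat \<Rightarrow> nat \<Rightarrow> nat \<Rightarrow> 'b::field \<Rightarrow> 'b poly \<Rightarrow> 'b poly \<Rightarrow> 'b poly \<Rightarrow> 'b poly" where
  "bform \<delta> q t n \<gamma> \<theta> a b = (case \<delta> of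
      DStar \<Rightarrow> formstar q t n a b
    | DZero \<Rightarrow> form0 q t n a b
    | DGammaH \<Rightarrow> formH q t n \<gamma> \<theta> a b)"

definition Tdelta :: "delta \<Rightarrow> nat \<Rightarrow> nat \<Rightarrow> bool" where
  "Tdelta \<delta> p t = (case \<delta> of
      DStar \<Rightarrow> t \<ge> 2 \<and> t mod p \<noteq> 1 mod p
    | DZero \<Rightarrow> t \<ge> 2
    | DGammaH \<Rightarrow> t \<ge> 2 \<and> even t)"

definition ksubspace :: "nat \<Rightarrow> 'b::field poly set \<Rightarrow> 'b poly set \<Rightarrow> 'b poly set \<Rightarrow> bool" where
  "ksubspace n K J A \<longleftrightarrow> A \<subseteq> J \<and> 0 \<in> A \<and> (\<forall>x\<in>A. \<forall>y\<in>A. x + y \<in> A) \<and>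
     (\<forall>c\<in>K. \<forall>x\<in>A. rmult n c x \<in> A)"

definition kdim :: "nat \<Rightarrow> 'b::field poly set \<Rightarrow> 'b poly set \<Rightarrow> nat \<Rightarrow> bool" where
  "kdim n K A r \<longleftrightarrow> (\<exists>bs. length bs = r \<and> set bs \<subseteq> A \<and>
     (\<forall>cs. length cs = r \<and> set cs \<subseteq> K \<and> (\<Sum>i<r. rmult n (cs ! i) (bs ! i)) = 0
            \<longrightarrow> (\<forall>i<r. cs ! i = 0)) \<and>
     (\<forall>a\<in>A. \<exists>cs. length cs = r \<and> set cs \<subseteq> K \<and> a = (\<Sum>i<r. rmult n (cs ! i) (bs ! i))))"

definition dsum :: "'b::field poly set \<Rightarrow> 'b poly set \<Rightarrow> 'b poly set" where
  "dsum A B = {a + b | a b. a \<in> A \<and> b \<in> B}"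

end

theory Submission
  imports Defs
begin


definition omg :: "'b::field \<Rightarrow> nat \<Rightarrow> int \<Rightarrow> 'b" where
  "omg \<eta> n j = \<eta> ^ nat (j mod int n)"

definition ev :: "'b::field \<Rightarrow> nat \<Rightarrow> 'b poly \<Rightarrow> int \<Rightarrow> 'b" where
  "ev \<eta> n x j = poly x (omg \<eta> n j)"

locale base =
  fixes p q kk n t N :: nat and \<eta> :: "'b::{field,finite}"
  assumes prime: "prime p" and kk: "kk \<ge> 1" and qdef: "q = p ^ kk" and n1: "n \<ge> 1"
    and cop: "coprime n q" and t2: "t \<ge> 2" and card: "card (UNIV :: 'b set) = q ^ N"
    and tN: "t dvd N" and prim: "primitive_root n \<eta>"
begin

abbreviation "\<omega> \<equiv> omg \<eta> n"
abbreviation "E \<equiv> ev \<eta> n"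

lemma char: "CHAR('b) = p"
proof -
  have pos: "CHAR('b) > 0" by (rule finite_imp_CHAR_pos) simp
  hence pr: "prime CHAR('b)" by (rule prime_CHAR_semidom)
  have "(\<Sum>y\<in>UNIV. y + 1) = (\<Sum>y\<in>(UNIV::'b set). y)"
    by (rule sum.reindex_bij_witness[of _ "\<lambda>y. y - 1" "\<lambda>y. y + 1"]) auto
  hence "of_nat (card (UNIV::'b set)) = (0::'b)" by (simp add: sum.distrib)
  hence "CHAR('b) dvd card (UNIV::'b set)" by (simp add: of_nat_eq_0_iff_char_dvd)
  hence "CHAR('b) dvd p ^ (kk * N)" using card qdef by (simp add: power_mult)
  hence "CHAR('b) dvd p" using pr prime_dvd_power by blast
  thus ?thesis using pr prime by (simp add: primes_dvd_imp_eq)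
qed

lemma q2: "q \<ge> 2"
proof -
  have "p \<ge> 2" using prime by (rule prime_ge_2_nat)
  moreover have "p \<le> p ^ kk" using kk \<open>p \<ge> 2\<close> by (simp add: self_le_power)
  ultimately show ?thesis using qdef by simp
qed

lemma qpos: "q > 0" using q2 by simp

lemma frob_add: "(x + y :: 'b) ^ (q ^ m) = x ^ (q ^ m) + y ^ (q ^ m)"
  by (rule freshmans_dream') (auto simp: char prime qdef power_mult[symmetric])

lemma frob_sum: "(sum f A :: 'b) ^ (q ^ m) = (\<Sum>i\<in>A. f i ^ (q ^ m))"
  by (rule freshmans_dream_sum') (auto simp: char prime qdef power_mult[symmetric])

lemma frob_neg: "(- x :: 'b) ^ (q ^ m) = - (x ^ (q ^ m))"
proof -
  have "(x + - x) ^ (q ^ m) = x ^ (q ^ m) + (- x) ^ (q ^ m)" by (rule frob_add)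
  moreover have "(0::'b) ^ (q ^ m) = 0" using qpos by simp
  ultimately have "0 = x ^ (q ^ m) + (- x) ^ (q ^ m)" by simp
  thus ?thesis by (simp add: eq_neg_iff_add_eq_0 add.commute)
qed

lemma frob_diff: "(x - y :: 'b) ^ (q ^ m) = x ^ (q ^ m) - y ^ (q ^ m)"
  using frob_add[of x "-y" m] frob_neg[of y m] by simp

lemma frob1_add: "(x + y :: 'b) ^ q = x ^ q + y ^ q"
  using frob_add[of x y 1] by simp
lemma frob1_diff: "(x - y :: 'b) ^ q = x ^ q - y ^ q"
  using frob_diff[of x y 1] by simp

lemma eta_n: "\<eta> ^ n = 1" using prim by (simp add: primitive_root_def)

lemma eta_mod: "\<eta> ^ a = \<eta> ^ (a mod n)"
proof -
  have "\<eta> ^ a = \<eta> ^ (n * (a div n) + a mod n)" by simp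
  also have "\<dots> = (\<eta>^n)^(a div n) * \<eta>^(a mod n)"
    by (simp only: power_add power_mult)
  also have "\<dots> = \<eta>^(a mod n)" by (simp only: eta_n power_one mult_1_left)
  finally show ?thesis .
qed

lemma eta_cong: "int a mod int n = int b mod int n \<Longrightarrow> \<eta> ^ a = \<eta> ^ b"
  by (metis eta_mod nat_int zmod_int)

lemma omg_cong: "a mod int n = b mod int n \<Longrightarrow> \<omega> a = \<omega> b"
  by (simp add: omg_def)

lemma omg_mod: "\<omega> (a mod int n) = \<omega> a"
  by (simp add: omg_def)

lemma omg_add: "\<omega> (a + b) = \<omega> a * \<omega> b"
proof -
  have "\<omega> a * \<omega> b = \<eta> ^ (nat (a mod int n) + nat (b mod int n))"
    by (simp add: omg_def power_add)
  also have "\<dots> = \<eta> ^ nat ((a + b) mod int n)"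
    apply (rule eta_cong) using n1 by (simp add: mod_add_eq)
  finally show ?thesis by (simp add: omg_def)
qed

lemma omg_pow: "\<omega> a ^ m = \<omega> (a * int m)"
proof -
  have "\<omega> a ^ m = \<eta> ^ (nat (a mod int n) * m)" by (simp add: omg_def power_mult)
  also have "\<dots> = \<eta> ^ nat ((a * int m) mod int n)"
    apply (rule eta_cong) using n1 by (simp add: mod_mult_left_eq)
  finally show ?thesis by (simp add: omg_def)
qed

lemma omg_int: "\<omega> (int a) = \<eta> ^ a"
proof -
  have "nat (int a mod int n) = a mod n" by (metis nat_int of_nat_mod)
  thus ?thesis unfolding omg_def using eta_mod[of a] by (simp only:)
qed

lemma eta_nz: "\<eta> \<noteq> 0" using eta_n n1 by (metis one_neq_zero power_0_left not_one_le_zero)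

lemma omg_nz: "\<omega> a \<noteq> 0" using eta_nz by (simp add: omg_def)

lemma eta_inj: "a < n \<Longrightarrow> b < n \<Longrightarrow> \<eta> ^ a = \<eta> ^ b \<Longrightarrow> a = b"
proof (rule ccontr)
  assume ab: "a < n" "b < n" "\<eta> ^ a = \<eta> ^ b" "a \<noteq> b"
  { fix a b :: nat assume "a < n" "b < n" "\<eta> ^ a = \<eta> ^ b" "a < b"
    have "\<eta> ^ b = \<eta> ^ a * \<eta> ^ (b - a)" using \<open>a<b\<close> by (simp flip: power_add)
    then have "\<eta> ^ a * \<eta> ^ (b - a) = \<eta> ^ a * 1" using \<open>\<eta> ^ a = \<eta> ^ b\<close> by (metis mult_1_right)
    hence "\<eta> ^ (b - a) = 1" using eta_nz by simp
    moreover have "0 < b - a" "b - a < n" using \<open>a<b\<close> \<open>b<n\<close> by auto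
    ultimately have False using prim by (auto simp: primitive_root_def) }
  then show False using ab by (metis linorder_neqE_nat)
qed


lemma E_add: "E (x + y) j = E x j + E y j" by (simp add: ev_def)
lemma E_diff: "E (x - y) j = E x j - E y j" by (simp add: ev_def)
lemma E_minus: "E (- x) j = - E x j" by (simp add: ev_def)
lemma E_smult: "E (Polynomial.smult c x) j = c * E x j" by (simp add: ev_def)
lemma E_sum: "E (sum f A) j = (\<Sum>i\<in>A. E (f i) j)" by (simp add: ev_def poly_sum)
lemma E_zero: "E 0 j = 0" by (simp add: ev_def)
lemma E_cong: "a mod int n = b mod int n \<Longrightarrow> E x a = E x b"
  unfolding ev_def by (drule omg_cong) simp

lemma xn1_nz: "xn1 n \<noteq> (0::'b poly)"
proof -
  have "coeff (xn1 n :: 'b poly) n = 1" using n1 by (simp add: xn1_def)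
  thus ?thesis by auto
qed

lemma deg_xn1: "degree (xn1 n :: 'b poly) = n"
proof (rule antisym)
  show "degree (xn1 n :: 'b poly) \<le> n" unfolding xn1_def
    by (rule degree_diff_le) (auto simp: degree_monom_le)
  have "coeff (xn1 n :: 'b poly) n = 1" using n1 by (simp add: xn1_def)
  thus "n \<le> degree (xn1 n :: 'b poly)" by (intro le_degree) simp
qed

lemma deg_rmult: "degree (rmult n a (b::'b poly)) < n"
proof (cases "(a * b) mod xn1 n = 0")
  case True thus ?thesis using n1 by (simp add: rmult_def)
next
  case False
  thus ?thesis using degree_mod_less[OF xn1_nz, of "a*b"] deg_xn1 by (simp add: rmult_def)
qed

lemma omg_n: "\<omega> j ^ n = 1"
proof -
  have "\<omega> j ^ n = \<omega> (j * int n)" by (rule omg_pow)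
  also have "\<dots> = \<omega> 0" by (rule omg_cong) simp
  also have "\<dots> = 1" by (simp add: omg_def)
  finally show ?thesis .
qed

lemma E_xn1: "E (xn1 n) j = 0"
  by (simp add: ev_def xn1_def poly_monom omg_n)

lemma E_rmult: "E (rmult n a b) j = E a j * E b j"
proof -
  have "(a * b) mod xn1 n = a * b - (a * b) div xn1 n * xn1 n" by (simp add: minus_div_mult_eq_mod)
  hence "E (rmult n a b) j = E (a * b) j - E ((a * b) div xn1 n) j * E (xn1 n) j"
    by (simp add: rmult_def ev_def)
  thus ?thesis using E_xn1[of j] by (simp add: ev_def)
qed

lemma poly_lt: "degree (x::'b poly) < n \<Longrightarrow> poly x z = (\<Sum>i<n. coeff x i * z ^ i)"
proof -
  assume d: "degree x < n"
  have "poly x z = (\<Sum>i\<le>degree x. coeff x i * z ^ i)" by (rule poly_altdef)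
  also have "\<dots> = (\<Sum>i<n. coeff x i * z ^ i)"
    by (rule sum.mono_neutral_left) (use d in \<open>auto simp: coeff_eq_0\<close>)
  finally show ?thesis .
qed

lemma E_tau_base:
  assumes d: "degree (x::'b poly) < n"
  shows "E (tau q n u v x) (j * int (q ^ u)) = E x (j * v) ^ (q ^ u)"
proof -
  have "E (tau q n u v x) (j * int (q ^ u))
      = (\<Sum>i<n. coeff x i ^ (q ^ u) * \<omega> (j * int (q ^ u)) ^ nat ((v * int i) mod int n))"
    by (simp add: ev_def tau_def poly_sum poly_monom)
  also have "\<dots> = (\<Sum>i<n. (coeff x i * \<omega> (j * v) ^ i) ^ (q ^ u))"
  proof (rule sum.cong[OF refl])
    fix i assume "i \<in> {..<n}"
    have "\<omega> (j * int (q ^ u)) ^ nat ((v * int i) mod int n)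
        = \<omega> (j * int (q ^ u) * int (nat ((v * int i) mod int n)))" by (rule omg_pow)
    also have "\<dots> = \<omega> (j * v * int i * int (q ^ u))"
    proof (rule omg_cong)
      have nn: "int (nat ((v * int i) mod int n)) = (v * int i) mod int n" using n1 by simp
      show "j * int (q ^ u) * int (nat (v * int i mod int n)) mod int n =
            j * v * int i * int (q ^ u) mod int n"
        unfolding nn mod_mult_right_eq by (simp add: ac_simps)
    qed
    also have "\<dots> = (\<omega> (j * v) ^ i) ^ (q ^ u)" by (simp add: omg_pow)
    finally show "coeff x i ^ (q ^ u) * \<omega> (j * int (q ^ u)) ^ nat ((v * int i) mod int n)
        = (coeff x i * \<omega> (j * v) ^ i) ^ (q ^ u)" by (simp add: power_mult_distrib)
  qed
  also have "\<dots> = (\<Sum>i<n. coeff x i * \<omega> (j * v) ^ i) ^ (q ^ u)" by (simp add: frob_sum)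
  also have "\<dots> = E x (j * v) ^ (q ^ u)" by (simp add: ev_def poly_lt[OF d])
  finally show ?thesis .
qed

lemma ex_period: "\<exists>P>0. (int q ^ P) mod int n = 1 mod int n"
proof -
  have "\<not> inj_on (\<lambda>i. q ^ i mod n) {..n}"
  proof
    assume "inj_on (\<lambda>i. q ^ i mod n) {..n}"
    hence "card ((\<lambda>i. q ^ i mod n) ` {..n}) = Suc n" by (simp add: card_image)
    moreover have "(\<lambda>i. q ^ i mod n) ` {..n} \<subseteq> {..<n}" using n1 by auto
    hence "card ((\<lambda>i. q ^ i mod n) ` {..n}) \<le> n" using card_mono[of "{..<n}"] by fastforce
    ultimately show False by simp
  qed
  then obtain i j where ij: "i \<le> n" "j \<le> n" "i \<noteq> j" "q ^ i mod n = q ^ j mod n"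
    unfolding inj_on_def by auto
  { fix i j :: nat assume ij: "i < j" "q ^ i mod n = q ^ j mod n"
    have "int (q ^ i) mod int n = int (q ^ j) mod int n" using arg_cong[OF ij(2), of int]
      by (simp only: of_nat_mod)
    hence "int n dvd int q ^ i - int q ^ j" by (simp add: mod_eq_dvd_iff)
    hence "int n dvd int q ^ j - int q ^ i" by (simp add: dvd_diff_commute)
    hence "int n dvd int q ^ i * (int q ^ (j - i) - 1)" using ij(1)
      by (simp add: algebra_simps flip: power_add)
    moreover have "coprime (int n) (int q ^ i)" using cop by simp
    ultimately have "int n dvd int q ^ (j - i) - 1" using coprime_dvd_mult_right_iff by blast
    hence "(int q ^ (j - i)) mod int n = 1 mod int n" by (simp add: mod_eq_dvd_iff)
    hence "\<exists>P>0. (int q ^ P) mod int n = 1 mod int n" using ij(1) by (intro exI[of _ "j - i"]) simp }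
  thus ?thesis using ij by (metis linorder_neqE_nat)
qed

definition "Pq = (SOME P. P > 0 \<and> (int q ^ P) mod int n = 1 mod int n)"
lemma Pq: "Pq > 0" "(int q ^ Pq) mod int n = 1 mod int n"
  using someI_ex[OF ex_period] unfolding Pq_def by auto

definition "qi = q ^ (Pq - 1)"

lemma qqi: "(int q * int qi) mod int n = 1 mod int n"
proof -
  have "q * qi = q ^ Pq" using Pq(1) unfolding qi_def by (cases Pq) simp_all
  hence "int q * int qi = int q ^ Pq" by (metis of_nat_mult of_nat_power)
  thus ?thesis using Pq(2) by simp
qed

lemma qinv: "(j * int qi ^ m * int q ^ m) mod int n = j mod int n"
proof -
  have e: "(int qi ^ m * int q ^ m) = (int q * int qi) ^ m" by (simp add: power_mult_distrib mult.commute)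
  have "(int q * int qi) ^ m mod int n = ((int q * int qi) mod int n) ^ m mod int n"
    by (rule power_mod[symmetric])
  also have "\<dots> = (1 mod int n) ^ m mod int n" by (simp only: qqi)
  also have "\<dots> = 1 ^ m mod int n" by (rule power_mod)
  finally have "(int qi ^ m * int q ^ m) mod int n = 1 mod int n" unfolding e by simp
  hence "(j * ((int qi ^ m * int q ^ m) mod int n)) mod int n = (j * (1 mod int n)) mod int n"
    by simp
  thus ?thesis by (simp add: mod_mult_right_eq mult.assoc)
qed

lemma E_tau:
  assumes d: "degree (x::'b poly) < n"
  shows "E (tau q n u v x) k = E x (k * int qi ^ u * v) ^ (q ^ u)"
proof -
  have "E (tau q n u v x) k = E (tau q n u v x) (k * int qi ^ u * int (q ^ u))"
    by (rule E_cong) (simp add: qinv)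
  also have "\<dots> = E x (k * int qi ^ u * v) ^ (q ^ u)" by (rule E_tau_base[OF d])
  finally show ?thesis .
qed

lemma E_inj:
  assumes d: "degree (x::'b poly) < n" and z: "\<And>j. 0 \<le> j \<Longrightarrow> j < int n \<Longrightarrow> E x j = 0"
  shows "x = 0"
proof (rule ccontr)
  assume nz: "x \<noteq> 0"
  have sub: "(\<lambda>i. \<eta> ^ i) ` {..<n} \<subseteq> {z. poly x z = 0}"
  proof
    fix z assume "z \<in> (\<lambda>i. \<eta> ^ i) ` {..<n}"
    then obtain i where i: "i < n" "z = \<eta> ^ i" by auto
    have "E x (int i) = 0" using z[of "int i"] i by simp
    thus "z \<in> {z. poly x z = 0}" using i by (simp add: ev_def omg_int)
  qed
  have "inj_on (\<lambda>i. \<eta> ^ i) {..<n}" by (rule inj_onI) (auto intro: eta_inj)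
  hence "card ((\<lambda>i. \<eta> ^ i) ` {..<n}) = n" by (simp add: card_image)
  moreover have "card ((\<lambda>i. \<eta> ^ i) ` {..<n}) \<le> card {z. poly x z = 0}"
    by (rule card_mono[OF _ sub]) simp
  moreover have "card {z. poly x z = 0} \<le> degree x" by (rule card_poly_roots_bound[OF nz])
  ultimately show False using d by simp
qed

lemma E_inj_all: "degree (x::'b poly) < n \<Longrightarrow> (\<And>j. E x j = 0) \<Longrightarrow> x = 0"
  using E_inj by blast

lemma E_eq: "degree (x::'b poly) < n \<Longrightarrow> degree y < n \<Longrightarrow> (\<And>j. E x j = E y j) \<Longrightarrow> x = y"
proof -
  assume a: "degree x < n" "degree y < n" "\<And>j. E x j = E y j"
  have "degree (x - y) < n" using a by (simp add: degree_diff_less)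
  moreover have "\<And>j. E (x - y) j = 0" using a by (simp add: E_diff)
  ultimately have "x - y = 0" by (rule E_inj_all)
  thus ?thesis by simp
qed
end


context base begin

definition inC :: "int \<Rightarrow> int \<Rightarrow> bool" where
  "inC l j \<longleftrightarrow> nat (j mod int n) \<in> cyc q n l"

lemma cyc_mem: "x \<in> cyc q n l \<longleftrightarrow> (\<exists>i. int x = (l * int q ^ i) mod int n)"
proof
  assume "x \<in> cyc q n l"
  then obtain i where "x = nat ((l * int q ^ i) mod int n)" by (auto simp: cyc_def)
  moreover have "(l * int q ^ i) mod int n \<ge> 0" using n1 by simp
  ultimately show "\<exists>i. int x = (l * int q ^ i) mod int n" by auto
next
  assume "\<exists>i. int x = (l * int q ^ i) mod int n"
  then obtain i where "int x = (l * int q ^ i) mod int n" by auto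
  hence "x = nat ((l * int q ^ i) mod int n)" by simp
  thus "x \<in> cyc q n l" by (auto simp: cyc_def)
qed

lemma inC_iff: "inC l j \<longleftrightarrow> (\<exists>i. j mod int n = (l * int q ^ i) mod int n)"
proof -
  have "j mod int n \<ge> 0" using n1 by simp
  hence "int (nat (j mod int n)) = j mod int n" by simp
  thus ?thesis unfolding inC_def cyc_mem by simp
qed

lemma inC_mod: "j mod int n = j' mod int n \<Longrightarrow> inC l j \<longleftrightarrow> inC l j'"
  by (simp add: inC_iff)

lemma inC_self: "inC l (l * int q ^ i)"
  by (auto simp: inC_iff)

lemma inC_l: "inC l l"
  using inC_self[of l 0] by simp

lemma inC_mulq: "inC l j \<Longrightarrow> inC l (j * int q ^ m)"
proof -
  assume "inC l j"
  then obtain i where i: "j mod int n = (l * int q ^ i) mod int n" by (auto simp: inC_iff)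
  have "(j * int q ^ m) mod int n = ((j mod int n) * int q ^ m) mod int n" by (simp add: mod_mult_left_eq)
  also have "\<dots> = ((l * int q ^ i) mod int n * int q ^ m) mod int n" by (simp only: i)
  also have "\<dots> = (l * int q ^ (i + m)) mod int n" by (simp add: mod_mult_left_eq power_add mult.assoc)
  finally show ?thesis by (auto simp: inC_iff)
qed

lemma inC_mulqi: "inC l j \<Longrightarrow> inC l (j * int qi ^ m)"
proof -
  assume "inC l j"
  hence "inC l (j * int q ^ ((Pq - 1) * m))" by (rule inC_mulq)
  thus ?thesis by (simp add: qi_def power_mult)
qed

lemma inC_divq: "inC l (j * int q ^ m) \<Longrightarrow> inC l j"
proof -
  assume "inC l (j * int q ^ m)"
  hence "inC l (j * int q ^ m * int qi ^ m)" by (rule inC_mulqi)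
  moreover have "(j * int q ^ m * int qi ^ m) mod int n = j mod int n"
    using qinv[of j m] by (simp add: ac_simps)
  ultimately show ?thesis using inC_mod by blast
qed

lemma inC_divqi: "inC l (j * int qi ^ m) \<Longrightarrow> inC l j"
proof -
  assume "inC l (j * int qi ^ m)"
  hence "inC l (j * int qi ^ m * int q ^ m)" by (rule inC_mulq)
  moreover have "(j * int qi ^ m * int q ^ m) mod int n = j mod int n" by (rule qinv)
  ultimately show ?thesis using inC_mod by blast
qed

lemma cong_mult: "a mod int n = b mod int n \<Longrightarrow> (a * c) mod int n = (b * c) mod int n"
proof -
  assume h: "a mod int n = b mod int n"
  have "(a * c) mod int n = ((a mod int n) * c) mod int n" by (simp add: mod_mult_left_eq)
  also have "\<dots> = ((b mod int n) * c) mod int n" by (simp only: h)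
  also have "\<dots> = (b * c) mod int n" by (simp add: mod_mult_left_eq)
  finally show ?thesis .
qed

lemma cong_neg: "a mod int n = b mod int n \<Longrightarrow> (- a) mod int n = (- b) mod int n"
proof -
  assume h: "a mod int n = b mod int n"
  have "(- a) mod int n = (- (a mod int n)) mod int n" by (simp add: mod_minus_eq)
  also have "\<dots> = (- (b mod int n)) mod int n" by (simp only: h)
  also have "\<dots> = (- b) mod int n" by (simp add: mod_minus_eq)
  finally show ?thesis .
qed

lemma inC_neg: "inC l j \<longleftrightarrow> inC (- l) (- j)"
proof -
  have "(\<exists>i. j mod int n = (l * int q ^ i) mod int n) \<longleftrightarrow>
        (\<exists>i. (- j) mod int n = (- l * int q ^ i) mod int n)"
  proof -
    have "\<And>i. j mod int n = (l * int q ^ i) mod int n \<longleftrightarrow> (- j) mod int n = (- l * int q ^ i) mod int n"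
    proof
      fix i assume "j mod int n = (l * int q ^ i) mod int n"
      from cong_neg[OF this] show "(- j) mod int n = (- l * int q ^ i) mod int n" by simp
    next
      fix i assume "(- j) mod int n = (- l * int q ^ i) mod int n"
      from cong_neg[OF this] show "j mod int n = (l * int q ^ i) mod int n" by simp
    qed
    thus ?thesis by simp
  qed
  thus ?thesis by (simp add: inC_iff)
qed

lemma inC_trans: "inC b a \<Longrightarrow> inC a j \<Longrightarrow> inC b j"
proof -
  assume "inC b a" "inC a j"
  then obtain i k where i: "a mod int n = (b * int q ^ i) mod int n"
    and k: "j mod int n = (a * int q ^ k) mod int n" by (auto simp: inC_iff)
  have "j mod int n = ((a mod int n) * int q ^ k) mod int n" using k by (simp add: mod_mult_left_eq)
  also have "\<dots> = ((b * int q ^ i) mod int n * int q ^ k) mod int n" by (simp only: i)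
  also have "\<dots> = (b * int q ^ (i + k)) mod int n" by (simp add: mod_mult_left_eq power_add mult.assoc)
  finally show ?thesis by (auto simp: inC_iff)
qed

lemma inC_sym: "inC b a \<Longrightarrow> inC a b"
proof -
  assume "inC b a"
  then obtain i where i: "a mod int n = (b * int q ^ i) mod int n" by (auto simp: inC_iff)
  have "inC a (a * int qi ^ i)" using inC_l inC_mulqi by blast
  moreover have "(a * int qi ^ i) mod int n = (b * int q ^ i * int qi ^ i) mod int n"
    using cong_mult[OF i] .
  moreover have "(b * int q ^ i * int qi ^ i) mod int n = b mod int n"
    using qinv[of b i] by (simp add: ac_simps)
  ultimately show ?thesis using inC_mod[of "a * int qi ^ i" b a] by simp
qed

lemma cyc_eq: "inC b a \<Longrightarrow> cyc q n a = cyc q n b"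
proof -
  assume ba: "inC b a"
  have ab: "inC a b" using inC_sym[OF ba] .
  show ?thesis
  proof (intro set_eqI iffI)
    fix x assume "x \<in> cyc q n a"
    moreover have "x < n" using calculation n1 by (auto simp: cyc_def nat_less_iff)
    ultimately have "inC a (int x)" unfolding inC_def by simp
    hence "inC b (int x)" using inC_trans[OF ba] by blast
    thus "x \<in> cyc q n b" using \<open>x < n\<close> unfolding inC_def by simp
  next
    fix x assume "x \<in> cyc q n b"
    moreover have "x < n" using calculation n1 by (auto simp: cyc_def nat_less_iff)
    ultimately have "inC b (int x)" unfolding inC_def by simp
    hence "inC a (int x)" using inC_trans[OF ab] by blast
    thus "x \<in> cyc q n a" using \<open>x < n\<close> unfolding inC_def by simp
  qed
qed

lemma inC_cyc_iff: "inC l j \<longleftrightarrow> inC l' j" if "cyc q n l = cyc q n l'"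
  using that by (simp add: inC_def)

lemma cyc_sub: "cyc q n l \<subseteq> {..<n}"
  using n1 by (auto simp: cyc_def nat_less_iff)

lemma cyc_fin: "finite (cyc q n l)"
  using cyc_sub finite_subset by blast

end


context base begin

definition per :: "int \<Rightarrow> nat" where
  "per l = (LEAST m. m > 0 \<and> (l * int q ^ m) mod int n = l mod int n)"

lemma per_ex: "\<exists>m. m > 0 \<and> (l * int q ^ m) mod int n = l mod int n"
proof -
  have "(int q ^ Pq * l) mod int n = (1 * l) mod int n" using cong_mult[OF Pq(2)] by simp
  thus ?thesis using Pq(1) by (intro exI[of _ Pq]) (simp add: mult.commute)
qed

lemma per: "per l > 0" "(l * int q ^ per l) mod int n = l mod int n"
  using LeastI_ex[OF per_ex[of l]] unfolding per_def by auto

lemma per_min: "0 < m \<Longrightarrow> m < per l \<Longrightarrow> (l * int q ^ m) mod int n \<noteq> l mod int n"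
  using not_less_Least[of m "\<lambda>m. m > 0 \<and> (l * int q ^ m) mod int n = l mod int n"]
  unfolding per_def by auto

lemma per_red: "(l * int q ^ (per l * a + r)) mod int n = (l * int q ^ r) mod int n"
proof (induction a)
  case 0 then show ?case by simp
next
  case (Suc a)
  have e: "l * int q ^ (per l * Suc a + r) = (l * int q ^ per l) * int q ^ (per l * a + r)"
    by (simp add: power_add mult.assoc)
  have "((l * int q ^ per l) * int q ^ (per l * a + r)) mod int n = (l * int q ^ (per l * a + r)) mod int n"
    using cong_mult[OF per(2)[of l], of "int q ^ (per l * a + r)"] .
  thus ?case using Suc unfolding e by simp
qed

lemma per_red': "(l * int q ^ i) mod int n = (l * int q ^ (i mod per l)) mod int n"
  using per_red[of l "i div per l" "i mod per l"] by simp

lemma cyc_image: "cyc q n l = (\<lambda>i. nat ((l * int q ^ i) mod int n)) ` {..<per l}"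
proof (intro set_eqI iffI)
  fix x assume "x \<in> cyc q n l"
  then obtain i where "x = nat ((l * int q ^ i) mod int n)" by (auto simp: cyc_def)
  hence "x = nat ((l * int q ^ (i mod per l)) mod int n)" using per_red'[of l i] by simp
  moreover have "i mod per l < per l" using per(1) by simp
  ultimately show "x \<in> (\<lambda>i. nat ((l * int q ^ i) mod int n)) ` {..<per l}" by auto
qed (auto simp: cyc_def)

lemma cyc_inj: "inj_on (\<lambda>i. nat ((l * int q ^ i) mod int n)) {..<per l}"
proof -
  { fix i j assume ij: "i < j" "j < per l" "(l * int q ^ i) mod int n = (l * int q ^ j) mod int n"
    have "(l * int q ^ i * int qi ^ i) mod int n = (l * int q ^ j * int qi ^ i) mod int n"
      using cong_mult[OF ij(3)] .
    moreover have "(l * int q ^ i * int qi ^ i) mod int n = l mod int n"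
      using qinv[of l i] by (simp add: ac_simps)
    moreover have "l * int q ^ j * int qi ^ i = (l * int q ^ (j - i)) * int qi ^ i * int q ^ i"
    proof -
      have "int q ^ j = int q ^ (j - i) * int q ^ i" using ij(1) by (simp flip: power_add)
      thus ?thesis by (simp add: ac_simps)
    qed
    moreover have "((l * int q ^ (j - i)) * int qi ^ i * int q ^ i) mod int n = (l * int q ^ (j - i)) mod int n"
      by (rule qinv)
    ultimately have "(l * int q ^ (j - i)) mod int n = l mod int n" by simp
    moreover have "0 < j - i" "j - i < per l" using ij by auto
    ultimately have False using per_min by blast }
  note * = this
  show ?thesis
  proof (rule inj_onI)
    fix i j assume "i \<in> {..<per l}" "j \<in> {..<per l}"
      and e: "nat ((l * int q ^ i) mod int n) = nat ((l * int q ^ j) mod int n)"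
    have "(l * int q ^ i) mod int n = (l * int q ^ j) mod int n"
      using e n1 by (simp add: eq_nat_nat_iff)
    show "i = j"
    proof (cases i j rule: linorder_cases)
      case less thus ?thesis using * \<open>j \<in> _\<close> \<open>(l * int q ^ i) mod int n = _\<close> by auto
    next
      case greater thus ?thesis using * \<open>i \<in> _\<close> \<open>(l * int q ^ i) mod int n = _\<close> by fastforce
    qed simp
  qed
qed

lemma card_cyc: "card (cyc q n l) = per l"
  unfolding cyc_image using cyc_inj by (simp add: card_image)

lemma cyc_period: "(l * int q ^ card (cyc q n l)) mod int n = l mod int n"
  unfolding card_cyc by (rule per(2))

lemma per_neg: "per (- l) = per l"
proof -
  have "\<And>m. (- l * int q ^ m) mod int n = (- l) mod int n \<longleftrightarrow> (l * int q ^ m) mod int n = l mod int n"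
  proof
    fix m assume "(- l * int q ^ m) mod int n = (- l) mod int n"
    from cong_neg[OF this] show "(l * int q ^ m) mod int n = l mod int n" by simp
  next
    fix m assume "(l * int q ^ m) mod int n = l mod int n"
    from cong_neg[OF this] show "(- l * int q ^ m) mod int n = (- l) mod int n" by simp
  qed
  thus ?thesis unfolding per_def by simp
qed

lemma card_cyc_neg: "card (cyc q n (- l)) = card (cyc q n l)"
  by (simp add: card_cyc per_neg)

lemma cyc_nonempty: "nat (l mod int n) \<in> cyc q n l"
  unfolding cyc_def by (rule CollectI, rule exI[of _ 0]) simp

end


definition lin :: "'b::field \<Rightarrow> nat \<Rightarrow> 'b poly" where "lin \<eta> k = [:- (\<eta> ^ k), 1:]"

context base begin

lemma lin_nz: "lin \<eta> k \<noteq> 0" by (simp add: lin_def)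
lemma deg_lin: "degree (lin \<eta> k) = 1" by (simp add: lin_def)
lemma lc_lin: "lead_coeff (lin \<eta> k) = 1" by (simp add: lin_def)
lemma E_lin: "E (lin \<eta> k) j = \<omega> j - \<eta> ^ k" by (simp add: lin_def ev_def)

lemma E_prod_lin: "E (\<Prod>k\<in>A. lin \<eta> k) j = (\<Prod>k\<in>A. \<omega> j - \<eta> ^ k)"
  by (simp add: ev_def poly_prod E_lin[unfolded ev_def])

lemma deg_prod_lin: "finite A \<Longrightarrow> degree (\<Prod>k\<in>A. lin \<eta> k) = card A"
  by (simp add: degree_prod_eq_sum_degree lin_nz deg_lin)

lemma lc_prod_lin: "lead_coeff (\<Prod>k\<in>A. lin \<eta> k) = 1"
  by (simp add: lead_coeff_prod lc_lin)

lemma prod_lin_nz: "(\<Prod>k\<in>A. lin \<eta> k) \<noteq> 0"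
  by (induct A rule: infinite_finite_induct) (simp_all add: lin_nz)

lemma omg_nat_mod: "\<omega> j = \<eta> ^ nat (j mod int n)" by (simp add: omg_def)

lemma deg_sub_lt:
  fixes a b :: "'b poly"
  assumes "degree a \<le> n" "degree b \<le> n" "coeff a n = coeff b n"
  shows "degree (a - b) < n"
proof (cases "a - b = 0")
  case True thus ?thesis using n1 by simp
next
  case False
  have le: "degree (a - b) \<le> n" using assms by (simp add: degree_diff_le)
  have "coeff (a - b) n = 0" using assms by simp
  hence "degree (a - b) \<noteq> n" using False by (metis leading_coeff_0_iff)
  thus ?thesis using le by simp
qed

lemma xn1_prod: "xn1 n = (\<Prod>k\<in>{..<n}. lin \<eta> k)"
proof -
  let ?P = "\<Prod>k\<in>{..<n}. lin \<eta> k"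
  have dP: "degree ?P = n" by (simp add: deg_prod_lin)
  have cP: "coeff ?P n = 1" using lc_prod_lin[of "{..<n}"] dP by simp
  have cX: "coeff (xn1 n :: 'b poly) n = 1" using n1 by (simp add: xn1_def)
  have d: "degree (xn1 n - ?P) < n"
    by (rule deg_sub_lt) (use dP cP cX deg_xn1 in auto)
  have "xn1 n - ?P = 0"
  proof (rule E_inj_all[OF d])
    fix j
    have k: "nat (j mod int n) \<in> {..<n}" using n1 by (simp add: nat_less_iff)
    have "E ?P j = 0" unfolding E_prod_lin
      by (rule prod_zero[OF _ bexI[OF _ k]]) (auto simp: omg_nat_mod)
    thus "E (xn1 n - ?P) j = 0" by (simp add: E_diff E_xn1)
  qed
  thus ?thesis by simp
qed

definition gp :: "int \<Rightarrow> 'b poly" where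
  "gp l = (\<Prod>k\<in>{..<n} - cyc q n l. lin \<eta> k)"

lemma fpoly_eq: "fpoly q n \<eta> ls i = (\<Prod>k\<in>cyc q n (int (ls ! i)). lin \<eta> k)"
  by (simp add: fpoly_def lin_def)

lemma xn1_split: "xn1 n = gp l * (\<Prod>k\<in>cyc q n l. lin \<eta> k)"
  unfolding xn1_prod gp_def by (rule prod.subset_diff[OF cyc_sub]) simp

lemma div_fpoly: "xn1 n div fpoly q n \<eta> ls i = gp (int (ls ! i))"
  unfolding fpoly_eq xn1_split[of "int (ls ! i)"]
  using prod_lin_nz by simp

lemma E_gp_zero: "\<not> inC l j \<Longrightarrow> E (gp l) j = 0"
proof -
  assume "\<not> inC l j"
  hence k: "nat (j mod int n) \<in> {..<n} - cyc q n l" using n1 by (simp add: inC_def nat_less_iff)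
  show ?thesis unfolding gp_def E_prod_lin
    by (rule prod_zero[OF _ bexI[OF _ k]]) (auto simp: omg_nat_mod)
qed

lemma E_gp_frob: "E (gp l) (j * int q) = E (gp l) j ^ q"
proof -
  define D where "D = {..<n} - cyc q n l"
  define \<sigma> where "\<sigma> k = nat ((int k * int q) mod int n)" for k
  have inj: "inj_on \<sigma> D"
  proof (rule inj_onI)
    fix a b assume ab: "a \<in> D" "b \<in> D" "\<sigma> a = \<sigma> b"
    have "(int a * int q) mod int n = (int b * int q) mod int n"
      using ab(3) n1 by (simp add: \<sigma>_def eq_nat_nat_iff)
    hence "(int a * int q * int qi ^ 1) mod int n = (int b * int q * int qi ^ 1) mod int n"
      by (rule cong_mult)
    moreover have "(int a * int q * int qi ^ 1) mod int n = int a mod int n"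
      using qinv[of "int a" 1] by (simp add: ac_simps)
    moreover have "(int b * int q * int qi ^ 1) mod int n = int b mod int n"
      using qinv[of "int b" 1] by (simp add: ac_simps)
    ultimately have "int a mod int n = int b mod int n" by simp
    moreover have "a < n" "b < n" using ab by (auto simp: D_def)
    ultimately show "a = b" by simp
  qed
  have sub: "\<sigma> ` D \<subseteq> D"
  proof
    fix x assume "x \<in> \<sigma> ` D"
    then obtain k where k: "k \<in> D" "x = \<sigma> k" by auto
    have "x < n" using k n1 by (simp add: \<sigma>_def nat_less_iff)
    moreover have "x \<notin> cyc q n l"
    proof
      assume "x \<in> cyc q n l"
      hence "inC l (int k * int q ^ 1)" using k by (simp add: inC_def \<sigma>_def)
      hence "inC l (int k)" by (rule inC_divq)
      hence "k \<in> cyc q n l" using k(1) by (simp add: inC_def D_def)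
      thus False using k(1) by (simp add: D_def)
    qed
    ultimately show "x \<in> D" by (simp add: D_def)
  qed
  have im: "\<sigma> ` D = D" using endo_inj_surj[OF _ sub inj] by (simp add: D_def)
  have "E (gp l) j ^ q = (\<Prod>k\<in>D. (\<omega> j - \<eta> ^ k) ^ q)"
    by (simp add: gp_def E_prod_lin D_def prod_power_distrib)
  also have "\<dots> = (\<Prod>k\<in>D. \<omega> (j * int q) - \<eta> ^ \<sigma> k)"
  proof (rule prod.cong[OF refl])
    fix k
    have "(\<eta> ^ k) ^ q = \<omega> (int k * int q)" by (simp add: omg_pow flip: omg_int)
    also have "\<dots> = \<eta> ^ \<sigma> k" by (simp add: \<sigma>_def omg_def)
    finally show "(\<omega> j - \<eta> ^ k) ^ q = \<omega> (j * int q) - \<eta> ^ \<sigma> k"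
      by (simp add: frob1_diff omg_pow)
  qed
  also have "\<dots> = (\<Prod>k\<in>\<sigma> ` D. \<omega> (j * int q) - \<eta> ^ k)"
    by (rule prod.reindex[OF inj, symmetric, unfolded comp_def])
  also have "\<dots> = (\<Prod>k\<in>D. \<omega> (j * int q) - \<eta> ^ k)" by (simp only: im)
  also have "\<dots> = E (gp l) (j * int q)" by (simp add: gp_def E_prod_lin D_def)
  finally show ?thesis by simp
qed

definition good :: "nat \<Rightarrow> int \<Rightarrow> 'b poly \<Rightarrow> bool" where
  "good m l x \<longleftrightarrow> degree x < n \<and> (\<forall>j. \<not> inC l j \<longrightarrow> E x j = 0) \<and>
      (\<forall>j. E x (j * int q ^ m) = E x j ^ (q ^ m))"

lemma frob_iter:
  assumes "\<And>j. E x (j * int q) = E x j ^ q"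
  shows "E x (j * int q ^ m) = E x j ^ (q ^ m)"
proof (induction m arbitrary: j)
  case 0 show ?case by simp
next
  case (Suc m)
  have "E x (j * int q ^ Suc m) = E x ((j * int q ^ m) * int q)" by (simp add: ac_simps)
  also have "\<dots> = E x (j * int q ^ m) ^ q" by (rule assms)
  also have "\<dots> = (E x j ^ (q ^ m)) ^ q" using Suc by simp
  also have "\<dots> = E x j ^ (q ^ Suc m)" by (simp add: power_mult[symmetric] mult.commute)
  finally show ?case .
qed

lemma good1_iter: "good 1 l x \<Longrightarrow> good m l x"
  unfolding good_def using frob_iter[of x] by simp

lemma E_Rn: "c \<in> Rn (q ^ m) n \<Longrightarrow> E c (j * int q ^ m) = E c j ^ (q ^ m)"
proof -
  assume c: "c \<in> Rn (q ^ m) n"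
  have d: "degree c < n" and co: "\<And>i. coeff c i ^ (q ^ m) = coeff c i"
    using c by (auto simp: Rn_def Fq_def)
  have "E c (j * int q ^ m) = (\<Sum>i<n. coeff c i * \<omega> (j * int q ^ m) ^ i)"
    by (simp add: ev_def poly_lt[OF d])
  also have "\<dots> = (\<Sum>i<n. (coeff c i * \<omega> j ^ i) ^ (q ^ m))"
  proof (rule sum.cong[OF refl])
    fix i
    have "\<omega> (j * int q ^ m) = \<omega> j ^ (q ^ m)" by (simp add: omg_pow)
    thus "coeff c i * \<omega> (j * int q ^ m) ^ i = (coeff c i * \<omega> j ^ i) ^ (q ^ m)"
      by (simp add: power_mult_distrib co flip: power_mult) (simp add: mult.commute)
  qed
  also have "\<dots> = E c j ^ (q ^ m)" by (simp add: frob_sum ev_def poly_lt[OF d])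
  finally show ?thesis .
qed

lemma good_rmult_gp:
  assumes c: "c \<in> Rn (q ^ m) n"
  shows "good m l (rmult n c (gp l))"
  unfolding good_def
proof (intro conjI allI impI)
  show "degree (rmult n c (gp l)) < n" by (rule deg_rmult)
next
  fix j assume "\<not> inC l j"
  thus "E (rmult n c (gp l)) j = 0" by (simp add: E_rmult E_gp_zero)
next
  fix j
  have "E (gp l) (j * int q ^ m) = E (gp l) j ^ (q ^ m)" using frob_iter E_gp_frob by blast
  thus "E (rmult n c (gp l)) (j * int q ^ m) = E (rmult n c (gp l)) j ^ (q ^ m)"
    by (simp add: E_rmult E_Rn[OF c] power_mult_distrib)
qed

lemma Jid_good: "x \<in> Jid q t n \<eta> ls i \<Longrightarrow> good t (int (ls ! i)) x"
  unfolding Jid_def div_fpoly using good_rmult_gp by auto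

lemma Kid_good: "x \<in> Kid q n \<eta> ls i \<Longrightarrow> good 1 (int (ls ! i)) x"
  unfolding Kid_def div_fpoly using good_rmult_gp[of _ 1] by auto

end


lemma neg_closed:
  fixes A :: "'a::ab_group_add set"
  assumes fin: "finite A" and z: "0 \<in> A" and add: "\<And>x y. x \<in> A \<Longrightarrow> y \<in> A \<Longrightarrow> x + y \<in> A"
    and x: "x \<in> A"
  shows "- x \<in> A"
proof -
  have sub: "(\<lambda>y. y + x) ` A \<subseteq> A" using add x by auto
  have inj: "inj_on (\<lambda>y. y + x) A" by (rule inj_onI) simp
  have "(\<lambda>y. y + x) ` A = A" by (rule endo_inj_surj[OF fin sub inj])
  hence "0 \<in> (\<lambda>y. y + x) ` A" using z by simp
  then obtain y where "y \<in> A" "0 = y + x" by auto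
  hence "y = - x" by (simp add: eq_neg_iff_add_eq_0)
  thus ?thesis using \<open>y \<in> A\<close> by simp
qed

lemma card_kernel:
  fixes A :: "'a::ab_group_add set" and F :: "'a \<Rightarrow> 'c::ab_group_add"
  assumes fin: "finite A" and z: "0 \<in> A" and add: "\<And>x y. x \<in> A \<Longrightarrow> y \<in> A \<Longrightarrow> x + y \<in> A"
    and hom: "\<And>x y. x \<in> A \<Longrightarrow> y \<in> A \<Longrightarrow> F (x + y) = F x + F y"
  shows "card A = card {x\<in>A. F x = 0} * card (F ` A)"
proof -
  have neg: "\<And>x. x \<in> A \<Longrightarrow> - x \<in> A" using neg_closed[OF fin z add] by blast
  have F0: "F 0 = 0" using hom[OF z z] by simp
  have Fneg: "\<And>x. x \<in> A \<Longrightarrow> F (- x) = - F x"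
  proof -
    fix x assume x: "x \<in> A"
    have "F (x + - x) = F x + F (- x)" using hom[OF x neg[OF x]] .
    thus "F (- x) = - F x" using F0 by (simp add: eq_neg_iff_add_eq_0 add.commute)
  qed
  have A_eq: "A = (\<Union>y\<in>F ` A. {x\<in>A. F x = y})" by auto
  have fib: "card {x\<in>A. F x = y} = card {x\<in>A. F x = 0}" if y: "y \<in> F ` A" for y
  proof -
    obtain x0 where x0: "x0 \<in> A" "F x0 = y" using y by auto
    have "bij_betw (\<lambda>x. x - x0) {x\<in>A. F x = y} {x\<in>A. F x = 0}"
    proof (rule bij_betw_byWitness[of _ "\<lambda>k. k + x0"])
      show "\<forall>a\<in>{x \<in> A. F x = y}. a - x0 + x0 = a" by simp
      show "\<forall>a'\<in>{x \<in> A. F x = 0}. a' + x0 - x0 = a'" by simp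
      show "(\<lambda>x. x - x0) ` {x \<in> A. F x = y} \<subseteq> {x \<in> A. F x = 0}"
      proof
        fix z assume "z \<in> (\<lambda>x. x - x0) ` {x \<in> A. F x = y}"
        then obtain x where x: "x \<in> A" "F x = y" "z = x - x0" by auto
        have "x + - x0 \<in> A" using add[OF x(1) neg[OF x0(1)]] .
        moreover have "F (x + - x0) = 0" using hom[OF x(1) neg[OF x0(1)]] Fneg[OF x0(1)] x0 x by simp
        ultimately show "z \<in> {x \<in> A. F x = 0}" using x by simp
      qed
      show "(\<lambda>k. k + x0) ` {x \<in> A. F x = 0} \<subseteq> {x \<in> A. F x = y}"
        using add x0 hom by auto
    qed
    thus ?thesis by (rule bij_betw_same_card)
  qed
  have "card A = (\<Sum>y\<in>F ` A. card {x\<in>A. F x = y})"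
    by (subst A_eq, rule card_UN_disjoint) (use fin in auto)
  also have "\<dots> = (\<Sum>y\<in>F ` A. card {x\<in>A. F x = 0})" using fib by simp
  finally show ?thesis by simp
qed

context base begin

lemma power_card_self: "(x::'b) ^ (q ^ N) = x"
proof (cases "x = 0")
  case True thus ?thesis using qpos by simp
next
  case False
  have cpos: "card (UNIV :: 'b set) > 0" using card qpos by simp
  have "x * (\<Prod>y\<in>UNIV-{0}. x * y) = x * x ^ (card (UNIV :: 'b set) - 1) * \<Prod>(UNIV-{0})"
    by (simp add: prod.distrib mult_ac)
  also have "x * x ^ (card (UNIV :: 'b set) - 1) = x ^ card (UNIV :: 'b set)"
    using cpos by (simp flip: power_Suc)
  also have "(\<Prod>y\<in>UNIV-{0}. x * y) = (\<Prod>y\<in>UNIV-{0}. y)"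
    by (rule prod.reindex_bij_witness[of _ "\<lambda>y. y / x" "\<lambda>y. x * y"]) (use False in auto)
  finally have "x * \<Prod>(UNIV-{0::'b}) = x ^ card (UNIV :: 'b set) * \<Prod>(UNIV-{0})" .
  moreover have "\<Prod>(UNIV-{0::'b}) \<noteq> 0" by simp
  ultimately have "x = x ^ card (UNIV :: 'b set)" by simp
  thus ?thesis using card by simp
qed

lemma N_pos: "N > 0"
proof (rule ccontr)
  assume "\<not> N > 0"
  hence "card (UNIV :: 'b set) = 1" using card by simp
  moreover have "card {0::'b, 1} = 2" by simp
  moreover have "card {0::'b, 1} \<le> card (UNIV :: 'b set)" by (rule card_mono) auto
  ultimately show False by simp
qed

lemma card_Fq: "card (Fq q :: 'b set) \<ge> q"
proof -
  define F :: "'b \<Rightarrow> 'b" where "F x = x ^ q - x" for x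
  define R :: "'b poly" where "R = (\<Sum>j<N. monom 1 (q ^ j))"
  have hom: "F (x + y) = F x + F y" for x y by (simp add: F_def frob1_add)
  have ker: "{x\<in>UNIV. F x = 0} = Fq q" by (auto simp: F_def Fq_def)
  have cardU: "card (UNIV :: 'b set) = card (Fq q :: 'b set) * card (F ` UNIV)"
    using card_kernel[of UNIV F] hom ker by simp
  have rootR: "poly R (F x) = 0" for x
  proof -
    have "poly R (F x) = (\<Sum>j<N. (x ^ q - x) ^ (q ^ j))" by (simp add: R_def poly_sum poly_monom F_def)
    also have "\<dots> = (\<Sum>j<N. x ^ (q ^ Suc j) - x ^ (q ^ j))"
      by (rule sum.cong) (simp_all add: frob_diff power_mult[symmetric] mult.commute)
    also have "\<dots> = x ^ (q ^ N) - x" by (subst sum_lessThan_telescope) simp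
    also have "\<dots> = 0" by (simp add: power_card_self)
    finally show ?thesis .
  qed
  have cR: "coeff R (q ^ (N - 1)) = 1"
  proof -
    have "coeff R (q ^ (N - 1)) = (\<Sum>j<N. if q ^ j = q ^ (N - 1) then 1 else 0)"
      by (simp add: R_def coeff_sum coeff_monom)
    also have "\<dots> = (\<Sum>j\<in>{N - 1}. 1)"
      using q2 N_pos by (intro sum.mono_neutral_cong_right) auto
    finally show ?thesis by simp
  qed
  hence Rnz: "R \<noteq> 0" by auto
  have dR: "degree R \<le> q ^ (N - 1)" unfolding R_def
  proof (rule degree_sum_le)
    fix j assume "j \<in> {..<N}"
    hence "q ^ j \<le> q ^ (N - 1)" using q2 by (intro power_increasing) auto
    thus "degree (monom (1::'b) (q ^ j)) \<le> q ^ (N - 1)" by (simp add: degree_monom_eq)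
  qed simp
  have "card (F ` UNIV) \<le> card {y. poly R y = 0}" by (rule card_mono) (auto simp: rootR)
  also have "\<dots> \<le> q ^ (N - 1)" using card_poly_roots_bound[OF Rnz] dR by simp
  finally have "q ^ N \<le> card (Fq q :: 'b set) * q ^ (N - 1)" using cardU card
    by (metis mult_le_mono2)
  moreover have "q ^ N = q * q ^ (N - 1)" using N_pos by (cases N) auto
  ultimately have "q * q ^ (N - 1) \<le> card (Fq q :: 'b set) * q ^ (N - 1)" by simp
  thus ?thesis using qpos by simp
qed

end


context base begin

lemma good_diff: "good m l x \<Longrightarrow> good m l y \<Longrightarrow> good m l (x - y)"
  unfolding good_def
proof (elim conjE, intro conjI allI impI)
  assume a: "degree x < n" "\<forall>j. \<not> inC l j \<longrightarrow> E x j = 0" "\<forall>j. E x (j * int q ^ m) = E x j ^ q ^ m"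
     "degree y < n" "\<forall>j. \<not> inC l j \<longrightarrow> E y j = 0" "\<forall>j. E y (j * int q ^ m) = E y j ^ q ^ m"
  show "degree (x - y) < n" using a by (simp add: degree_diff_less)
  fix j
  show "\<not> inC l j \<Longrightarrow> E (x - y) j = 0" using a by (simp add: E_diff)
  show "E (x - y) (j * int q ^ m) = E (x - y) j ^ q ^ m" using a by (simp only: E_diff frob_diff)
qed

lemma good_add: "good m l x \<Longrightarrow> good m l y \<Longrightarrow> good m l (x + y)"
  unfolding good_def
proof (elim conjE, intro conjI allI impI)
  assume a: "degree x < n" "\<forall>j. \<not> inC l j \<longrightarrow> E x j = 0" "\<forall>j. E x (j * int q ^ m) = E x j ^ q ^ m"
     "degree y < n" "\<forall>j. \<not> inC l j \<longrightarrow> E y j = 0" "\<forall>j. E y (j * int q ^ m) = E y j ^ q ^ m"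
  show "degree (x + y) < n" using a by (simp add: degree_add_less)
  fix j
  show "\<not> inC l j \<Longrightarrow> E (x + y) j = 0" using a by (simp add: E_add)
  show "E (x + y) (j * int q ^ m) = E (x + y) j ^ q ^ m" using a by (simp only: E_add frob_add)
qed

lemma zero_from_l:
  assumes d: "degree x < n" and off: "\<And>j. \<not> inC l j \<Longrightarrow> E x j = 0"
    and fr: "\<And>j. E x (j * int q) = E x j ^ q" and z: "E x l = 0"
  shows "x = 0"
proof (rule E_inj_all[OF d])
  fix j show "E x j = 0"
  proof (cases "inC l j")
    case True
    then obtain i where i: "j mod int n = (l * int q ^ i) mod int n" by (auto simp: inC_iff)
    have "E x j = E x (l * int q ^ i)" by (rule E_cong[OF i])
    also have "\<dots> = E x l ^ (q ^ i)" by (rule frob_iter[OF fr])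
    also have "\<dots> = 0" using z qpos by simp
    finally show ?thesis .
  qed (rule off)
qed

lemma good1_zero: "good 1 l x \<Longrightarrow> E x l = 0 \<Longrightarrow> x = 0"
  unfolding good_def by (rule zero_from_l) auto

definition Fd :: "nat \<Rightarrow> 'b set" where "Fd d = {z. z ^ (q ^ d) = z}"

lemma card_Fd: "d \<ge> 1 \<Longrightarrow> card (Fd d) \<le> q ^ d"
proof -
  assume d1: "d \<ge> 1"
  define R :: "'b poly" where "R = monom 1 (q ^ d) - [:0, 1:]"
  have "q \<le> q ^ d" using d1 qpos by (simp add: self_le_power)
  hence qd: "q ^ d \<ge> 2" using q2 by simp
  have c2: "coeff [:0, 1::'b:] (q ^ d) = 0"
  proof -
    obtain k where "q ^ d = Suc (Suc k)" using qd by (metis add_2_eq_Suc le_Suc_ex)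
    thus ?thesis by simp
  qed
  have cR: "coeff R (q ^ d) = 1" using c2 by (simp add: R_def)
  hence Rnz: "R \<noteq> 0" by auto
  have dR: "degree R \<le> q ^ d" unfolding R_def
    by (rule degree_diff_le) (use qd in \<open>auto simp: degree_monom_eq\<close>)
  have "Fd d \<subseteq> {y. poly R y = 0}" by (auto simp: Fd_def R_def poly_monom)
  hence "card (Fd d) \<le> card {y. poly R y = 0}" by (intro card_mono) auto
  also have "\<dots> \<le> q ^ d" using card_poly_roots_bound[OF Rnz] dR by simp
  finally show ?thesis .
qed

lemma E_in_Fd:
  assumes "good 1 l x"
  shows "E x l \<in> Fd (card (cyc q n l))"
proof -
  have "E x l ^ (q ^ card (cyc q n l)) = E x (l * int q ^ card (cyc q n l))"
    using assms good1_iter unfolding good_def by metis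
  also have "\<dots> = E x l" by (rule E_cong[OF cyc_period])
  finally show ?thesis by (simp add: Fd_def)
qed

lemma card_cyc_le: "card (cyc q n l) \<le> n"
  using card_mono[OF _ cyc_sub, of l] by simp

lemma card_cyc_pos: "card (cyc q n l) \<ge> 1"
  using cyc_nonempty[of l] cyc_fin[of l] by (metis One_nat_def Suc_leI card_gt_0_iff empty_iff)

lemma deg_gp: "degree (gp l) = n - card (cyc q n l)"
  unfolding gp_def by (simp add: deg_prod_lin card_Diff_subset[OF cyc_fin cyc_sub])

lemma gp_nz: "gp l \<noteq> 0" unfolding gp_def by (rule prod_lin_nz)

lemma Kid_alt: "Kid q n \<eta> ls i = {rmult n c (gp (int (ls ! i))) | c. c \<in> Rn q n}"
  unfolding Kid_def div_fpoly ..

lemma K_card_ge: "card (Kid q n \<eta> ls i) \<ge> q ^ card (cyc q n (int (ls ! i)))"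
  if fin: "finite (Kid q n \<eta> ls i)"
proof -
  define l where "l = int (ls ! i)"
  define d where "d = card (cyc q n l)"
  define cf :: "(nat \<Rightarrow> 'b) \<Rightarrow> 'b poly" where "cf f = (\<Sum>k<d. monom (f k) k)" for f
  define \<Phi> where "\<Phi> f = rmult n (cf f) (gp l)" for f
  have d1: "d \<ge> 1" "d \<le> n" using card_cyc_pos card_cyc_le d_def by auto
  have coeff_cf: "coeff (cf f) k = (if k < d then f k else 0)" for f k
    by (simp add: cf_def coeff_sum coeff_monom)
  have deg_cf: "degree (cf f) \<le> d - 1" for f unfolding cf_def
    by (rule degree_sum_le) (auto intro: order.trans[OF degree_monom_le])
  have dg: "degree (gp l) = n - d" by (simp add: deg_gp d_def)
  have prod_deg: "degree (cf f * gp l) < n" for f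
  proof (cases "cf f = 0")
    case True thus ?thesis using n1 by simp
  next
    case False
    have "degree (cf f * gp l) = degree (cf f) + degree (gp l)"
      using False gp_nz by (rule degree_mult_eq)
    thus ?thesis using deg_cf[of f] dg d1 by linarith
  qed
  have Phi_eq: "\<Phi> f = cf f * gp l" for f
    unfolding \<Phi>_def rmult_def by (rule mod_poly_less) (use prod_deg deg_xn1 in simp)
  have Fq0: "0 \<in> Fq q" using qpos by (simp add: Fq_def)
  have into: "\<Phi> ` (PiE {..<d} (\<lambda>_. Fq q)) \<subseteq> Kid q n \<eta> ls i"
  proof
    fix y assume "y \<in> \<Phi> ` (PiE {..<d} (\<lambda>_. Fq q))"
    then obtain f where f: "f \<in> PiE {..<d} (\<lambda>_. Fq q)" "y = \<Phi> f" by auto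
    have "cf f \<in> Rn q n" unfolding Rn_def
    proof (intro CollectI conjI allI)
      show "degree (cf f) < n" using deg_cf[of f] d1 by linarith
      fix k show "coeff (cf f) k \<in> Fq q" using f(1) Fq0 by (auto simp: coeff_cf)
    qed
    thus "y \<in> Kid q n \<eta> ls i" unfolding Kid_alt f(2) \<Phi>_def l_def by auto
  qed
  have inj: "inj_on \<Phi> (PiE {..<d} (\<lambda>_. Fq q))"
  proof (rule inj_onI)
    fix f g assume fg: "f \<in> PiE {..<d} (\<lambda>_. Fq q)" "g \<in> PiE {..<d} (\<lambda>_. Fq q)" "\<Phi> f = \<Phi> g"
    hence "cf f * gp l = cf g * gp l" by (simp add: Phi_eq)
    hence "cf f = cf g" using gp_nz by simp
    hence "\<And>k. k < d \<Longrightarrow> f k = g k" using coeff_cf by metis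
    thus "f = g" using fg(1,2) by (intro PiE_ext) auto
  qed
  have "q ^ d \<le> card (Fq q :: 'b set) ^ d" using card_Fq by (rule power_mono) simp
  also have "\<dots> = card (PiE {..<d} (\<lambda>_. Fq q :: 'b set))" by (simp add: card_PiE)
  also have "\<dots> = card (\<Phi> ` (PiE {..<d} (\<lambda>_. Fq q)))" using inj by (simp add: card_image)
  also have "\<dots> \<le> card (Kid q n \<eta> ls i)" by (rule card_mono[OF fin into])
  finally show ?thesis by (simp add: d_def l_def)
qed

lemma K_props:
  fixes ls :: "nat list" and i :: nat
  defines "l \<equiv> int (ls ! i)" and "K \<equiv> Kid q n \<eta> ls i"
  shows "finite K" "card K = q ^ card (cyc q n l)" "(\<lambda>x. E x l) ` K = Fd (card (cyc q n l))"
    "card (Fd (card (cyc q n l))) = q ^ card (cyc q n l)" "inj_on (\<lambda>x. E x l) K"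
proof -
  have good: "\<And>x. x \<in> K \<Longrightarrow> good 1 l x" unfolding K_def l_def by (rule Kid_good)
  show inj: "inj_on (\<lambda>x. E x l) K"
  proof (rule inj_onI)
    fix x y assume xy: "x \<in> K" "y \<in> K" "E x l = E y l"
    have "good 1 l (x - y)" using good xy by (simp add: good_diff)
    moreover have "E (x - y) l = 0" using xy by (simp add: E_diff)
    ultimately have "x - y = 0" by (rule good1_zero)
    thus "x = y" by simp
  qed
  have sub: "(\<lambda>x. E x l) ` K \<subseteq> Fd (card (cyc q n l))" using E_in_Fd good by blast
  show fin: "finite K" by (rule inj_on_finite[OF inj sub]) simp
  have ge: "card K \<ge> q ^ card (cyc q n l)" unfolding K_def l_def by (rule K_card_ge) (use fin K_def in simp)
  have "card K = card ((\<lambda>x. E x l) ` K)" using inj by (simp add: card_image)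
  also have "\<dots> \<le> card (Fd (card (cyc q n l)))" by (rule card_mono[OF _ sub]) simp
  also have "\<dots> \<le> q ^ card (cyc q n l)" by (rule card_Fd[OF card_cyc_pos])
  finally have le: "card K \<le> q ^ card (cyc q n l)" .
  show cK: "card K = q ^ card (cyc q n l)" using le ge by simp
  have "card ((\<lambda>x. E x l) ` K) = q ^ card (cyc q n l)" using inj cK by (simp add: card_image)
  moreover have "card ((\<lambda>x. E x l) ` K) \<le> card (Fd (card (cyc q n l)))" by (rule card_mono[OF _ sub]) simp
  ultimately show cF: "card (Fd (card (cyc q n l))) = q ^ card (cyc q n l)"
    using card_Fd[OF card_cyc_pos, of l] by simp
  show "(\<lambda>x. E x l) ` K = Fd (card (cyc q n l))"
    by (rule card_subset_eq) (use sub cF \<open>card ((\<lambda>x. E x l) ` K) = _\<close> in auto)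
qed

end


context base begin

definition al :: "'b poly \<Rightarrow> int \<Rightarrow> nat \<Rightarrow> 'b" where
  "al x k u = E x (k * int qi ^ u) ^ (q ^ u)"
definition be :: "'b poly \<Rightarrow> int \<Rightarrow> nat \<Rightarrow> 'b" where
  "be y k v = E y (- (k * int qi ^ v)) ^ (q ^ v)"

lemma E_tau1: "degree (x::'b poly) < n \<Longrightarrow> E (tau q n u 1 x) k = E x (k * int qi ^ u) ^ (q ^ u)"
  using E_tau[of x u 1 k] by simp

lemma E_taum: "degree (x::'b poly) < n \<Longrightarrow> E (tau q n u (-1) x) k = E x (- (k * int qi ^ u)) ^ (q ^ u)"
  using E_tau[of x u "-1" k] by simp

lemma deg_tau: "degree (tau q n u v (x::'b poly)) < n"
proof -
  have "degree (tau q n u v x) \<le> n - 1" unfolding tau_def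
  proof (rule degree_sum_le)
    fix i assume "i \<in> {..<n}"
    have "nat ((v * int i) mod int n) < n" using n1 by (simp add: nat_less_iff)
    thus "degree (monom (coeff x i ^ q ^ u) (nat ((v * int i) mod int n))) \<le> n - 1"
      using degree_monom_le[of "coeff x i ^ q ^ u" "nat ((v * int i) mod int n)"] by linarith
  qed simp
  thus ?thesis using n1 by linarith
qed

lemma deg_sum_tau: "degree (\<Sum>u<m. tau q n u v (f u :: 'b poly)) < n"
proof -
  have "degree (\<Sum>u<m. tau q n u v (f u :: 'b poly)) \<le> n - 1"
  proof (rule degree_sum_le)
    fix u show "degree (tau q n u v (f u)) \<le> n - 1" using deg_tau[of u v "f u"] by linarith
  qed simp
  thus ?thesis using n1 by linarith
qed

lemma E_T: "E (\<Sum>u<t. tau q n u 1 (rmult n A B)) k = (\<Sum>u<t. (E A (k * int qi ^ u) * E B (k * int qi ^ u)) ^ (q ^ u))"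
  by (simp add: E_sum E_tau1[OF deg_rmult] E_rmult)

lemma E_form0: "degree b < n \<Longrightarrow> E (form0 q t n a b) k = (\<Sum>u<t. al a k u * be b k u)"
  unfolding form0_def E_T
  by (simp add: E_taum al_def be_def power_mult_distrib)

lemma pow_pow_q: "(x ^ (q ^ w)) ^ (q ^ u) = (x::'b) ^ (q ^ (u + w))"
  by (simp add: power_mult[symmetric] power_add mult.commute)

lemma E_formstar: "degree b < n \<Longrightarrow> E (formstar q t n a b) k = (\<Sum>u<t. al a k u * (\<Sum>w\<in>{1..<t}. be b k (u + w)))"
proof -
  assume d: "degree b < n"
  have "E (formstar q t n a b) k = (\<Sum>u<t. (E a (k * int qi ^ u) * (\<Sum>w\<in>{1..<t}. E b (- (k * int qi ^ u * int qi ^ w)) ^ (q ^ w))) ^ (q ^ u))"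
    unfolding formstar_def E_T by (simp add: E_sum E_taum[OF d])
  also have "\<dots> = (\<Sum>u<t. al a k u * (\<Sum>w\<in>{1..<t}. be b k (u + w)))"
  proof (rule sum.cong[OF refl])
    fix u
    have "(\<Sum>w\<in>{1..<t}. E b (- (k * int qi ^ u * int qi ^ w)) ^ (q ^ w)) ^ (q ^ u)
        = (\<Sum>w\<in>{1..<t}. (E b (- (k * int qi ^ u * int qi ^ w)) ^ (q ^ w)) ^ (q ^ u))" by (rule frob_sum)
    also have "\<dots> = (\<Sum>w\<in>{1..<t}. be b k (u + w))"
      by (rule sum.cong[OF refl]) (simp add: be_def pow_pow_q power_add mult.assoc)
    finally show "(E a (k * int qi ^ u) * (\<Sum>w\<in>{1..<t}. E b (- (k * int qi ^ u * int qi ^ w)) ^ (q ^ w))) ^ (q ^ u)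
        = al a k u * (\<Sum>w\<in>{1..<t}. be b k (u + w))"
      by (simp add: al_def power_mult_distrib)
  qed
  finally show ?thesis .
qed

lemma E_formgamma: "degree b < n \<Longrightarrow> E (formgamma q t n \<gamma> a b) k = (\<Sum>u<t. \<gamma> ^ (q ^ u) * al a k u * be b k (u + t div 2))"
proof -
  assume d: "degree b < n"
  show ?thesis unfolding formgamma_def E_T
  proof (rule sum.cong[OF refl])
    fix u
    have "E (tau q n (t div 2) (- 1) b) (k * int qi ^ u) ^ (q ^ u) = be b k (u + t div 2)"
      by (simp add: E_taum[OF d] be_def pow_pow_q power_add mult.assoc)
    thus "(E (Polynomial.smult \<gamma> a) (k * int qi ^ u) * E (tau q n (t div 2) (- 1) b) (k * int qi ^ u)) ^ (q ^ u)
        = \<gamma> ^ (q ^ u) * al a k u * be b k (u + t div 2)"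
      by (simp add: E_smult al_def power_mult_distrib)
  qed
qed

end


context base begin

definition Bf :: "delta \<Rightarrow> 'b \<Rightarrow> 'b poly \<Rightarrow> 'b poly \<Rightarrow> 'b poly" where
  "Bf \<delta> \<gamma> a b = (case \<delta> of DStar \<Rightarrow> formstar q t n a b | DZero \<Rightarrow> form0 q t n a b
     | DGammaH \<Rightarrow> formgamma q t n \<gamma> a b)"

definition Sd :: "delta \<Rightarrow> 'b \<Rightarrow> (nat \<Rightarrow> 'b) \<Rightarrow> (nat \<Rightarrow> 'b) \<Rightarrow> 'b" where
  "Sd \<delta> \<gamma> f g = (case \<delta> of DStar \<Rightarrow> (\<Sum>u<t. f u) * (\<Sum>u<t. g u) - (\<Sum>u<t. f u * g u)
     | DZero \<Rightarrow> (\<Sum>u<t. f u * g u)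
     | DGammaH \<Rightarrow> (\<Sum>u<t. \<gamma> ^ (q ^ u) * f u * g (u + t div 2)))"

definition "gcond \<delta> \<gamma> \<longleftrightarrow> (\<delta> = DGammaH \<longrightarrow> \<gamma> ^ (q ^ t) = \<gamma> \<and> \<gamma> ^ (q ^ (t div 2)) = - \<gamma> \<and> even t)"

definition "sgnd \<delta> = (if \<delta> = DGammaH then - 1 else (1::'b))"

definition "per_t f \<longleftrightarrow> (\<forall>u. f (u + t) = f u)"

lemma psum1: "per_t (h::nat \<Rightarrow> 'b) \<Longrightarrow> (\<Sum>u<t. h (Suc u)) = (\<Sum>u<t. h u)"
proof -
  assume p: "per_t h"
  have "(\<Sum>u<Suc t. h u) = h 0 + (\<Sum>u<t. h (Suc u))" by (rule sum.lessThan_Suc_shift)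
  moreover have "(\<Sum>u<Suc t. h u) = (\<Sum>u<t. h u) + h t" by simp
  moreover have "h t = h 0" using p unfolding per_t_def by (metis add_0)
  ultimately have "(\<Sum>u<t. h u) + h 0 = h 0 + (\<Sum>u<t. h (Suc u))" by simp
  hence "(\<Sum>u<t. h u) + h 0 = (\<Sum>u<t. h (Suc u)) + h 0" by (simp only: add.commute)
  thus ?thesis by simp
qed

lemma psum: "per_t (h::nat \<Rightarrow> 'b) \<Longrightarrow> (\<Sum>u<t. h (u + m)) = (\<Sum>u<t. h u)"
proof (induction m)
  case 0 thus ?case by simp
next
  case (Suc m)
  have "per_t (\<lambda>u. h (u + m))" unfolding per_t_def
  proof
    fix u
    have "h ((u + m) + t) = h (u + m)" using Suc.prems unfolding per_t_def by blast
    thus "h (u + t + m) = h (u + m)" by (simp add: ac_simps)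
  qed
  hence "(\<Sum>u<t. h (Suc u + m)) = (\<Sum>u<t. h (u + m))" using psum1[of "\<lambda>u. h (u + m)"] by simp
  thus ?case using Suc by simp
qed

definition "frt x \<longleftrightarrow> (\<forall>j. E x (j * int q ^ t) = E x j ^ (q ^ t))"

lemma frt_good: "good t l x \<Longrightarrow> frt x" unfolding good_def frt_def by blast

lemma al_per: "frt x \<Longrightarrow> per_t (al x k)"
  unfolding per_t_def
proof
  fix u assume f: "frt x"
  have "al x k (u + t) = (E x (k * int qi ^ (u + t)) ^ (q ^ t)) ^ (q ^ u)"
    by (simp add: al_def pow_pow_q add.commute)
  also have "E x (k * int qi ^ (u + t)) ^ (q ^ t) = E x (k * int qi ^ (u + t) * int q ^ t)"
    using f unfolding frt_def by simp
  also have "\<dots> = E x (k * int qi ^ u)"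
    by (rule E_cong) (use qinv[of "k * int qi ^ u" t] in \<open>simp add: power_add mult.assoc\<close>)
  finally show "al x k (u + t) = al x k u" by (simp add: al_def)
qed

lemma be_per: "frt x \<Longrightarrow> per_t (be x k)"
  unfolding per_t_def
proof
  fix u assume f: "frt x"
  have "be x k (u + t) = (E x (- (k * int qi ^ (u + t))) ^ (q ^ t)) ^ (q ^ u)"
    by (simp add: be_def pow_pow_q add.commute)
  also have "E x (- (k * int qi ^ (u + t))) ^ (q ^ t) = E x (- (k * int qi ^ (u + t)) * int q ^ t)"
    using f[unfolded frt_def, rule_format, of "- (k * int qi ^ (u + t))"] by simp
  also have "\<dots> = E x (- (k * int qi ^ u))"
    by (rule E_cong) (use qinv[of "- (k * int qi ^ u)" t] in \<open>simp add: power_add mult.assoc\<close>)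
  finally show "be x k (u + t) = be x k u" by (simp add: be_def)
qed

lemma E_Bf:
  assumes d: "degree b < n" and fb: "frt b"
  shows "E (Bf \<delta> \<gamma> a b) k = Sd \<delta> \<gamma> (al a k) (be b k)"
proof (cases \<delta>)
  case DZero thus ?thesis by (simp add: Bf_def Sd_def E_form0[OF d])
next
  case DGammaH thus ?thesis by (simp add: Bf_def Sd_def E_formgamma[OF d])
next
  case DStar
  have p: "per_t (be b k)" by (rule be_per[OF fb])
  have "\<And>u. (\<Sum>w\<in>{1..<t}. be b k (u + w)) = (\<Sum>w<t. be b k w) - be b k u"
  proof -
    fix u
    have "{..<t} = insert 0 {1..<t}" using t2 by auto
    hence "(\<Sum>w<t. be b k (w + u)) = be b k u + (\<Sum>w\<in>{1..<t}. be b k (w + u))" by simp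
    moreover have "(\<Sum>w<t. be b k (w + u)) = (\<Sum>w<t. be b k w)" by (rule psum[OF p])
    ultimately show "(\<Sum>w\<in>{1..<t}. be b k (u + w)) = (\<Sum>w<t. be b k w) - be b k u"
      by (simp add: add.commute)
  qed
  hence "E (Bf \<delta> \<gamma> a b) k = (\<Sum>u<t. al a k u * ((\<Sum>w<t. be b k w) - be b k u))"
    using DStar by (simp add: Bf_def E_formstar[OF d])
  also have "\<dots> = (\<Sum>u<t. al a k u * (\<Sum>w<t. be b k w)) - (\<Sum>u<t. al a k u * be b k u)"
    by (simp add: right_diff_distrib sum_subtractf)
  also have "\<dots> = Sd \<delta> \<gamma> (al a k) (be b k)"
    using DStar by (simp add: Sd_def sum_distrib_right)
  finally show ?thesis .
qed

lemma al_add: "al (x + y) k u = al x k u + al y k u" by (simp add: al_def E_add frob_add)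
lemma be_add: "be (x + y) k u = be x k u + be y k u" by (simp add: be_def E_add frob_add)

lemma al_neg: "al x (- k) u = be x k u" by (simp add: al_def be_def)
lemma be_neg: "be x (- k) u = al x k u" by (simp add: al_def be_def)

lemma al_shift: "al x (k * int q) (Suc u) = al x k u ^ q"
proof -
  have "E x (k * int q * int qi ^ Suc u) = E x (k * int qi ^ u)"
    by (rule E_cong) (use qinv[of "k * int qi ^ u" 1] in \<open>simp add: ac_simps\<close>)
  have p: "\<And>y::'b. y ^ (q ^ Suc u) = (y ^ (q ^ u)) ^ q" by (simp add: power_mult[symmetric] mult.commute)
  show ?thesis unfolding al_def \<open>E x _ = _\<close> p ..
qed

lemma be_shift: "be x (k * int q) (Suc u) = be x k u ^ q"
proof -
  have "E x (- (k * int q * int qi ^ Suc u)) = E x (- (k * int qi ^ u))"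
    by (rule E_cong) (use qinv[of "- (k * int qi ^ u)" 1] in \<open>simp add: ac_simps\<close>)
  have p: "\<And>y::'b. y ^ (q ^ Suc u) = (y ^ (q ^ u)) ^ q" by (simp add: power_mult[symmetric] mult.commute)
  show ?thesis unfolding be_def \<open>E x _ = _\<close> p ..
qed

lemma Sd_add_left: "Sd \<delta> \<gamma> (\<lambda>u. f1 u + f2 u) g = Sd \<delta> \<gamma> f1 g + Sd \<delta> \<gamma> f2 g"
  by (cases \<delta>) (simp_all add: Sd_def algebra_simps sum.distrib)

lemma Sd_add_right: "Sd \<delta> \<gamma> f (\<lambda>u. g1 u + g2 u) = Sd \<delta> \<gamma> f g1 + Sd \<delta> \<gamma> f g2"
  by (cases \<delta>) (simp_all add: Sd_def algebra_simps sum.distrib)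

lemma Sd_scale: "Sd \<delta> \<gamma> f (\<lambda>u. z * g u) = z * Sd \<delta> \<gamma> f g"
  by (cases \<delta>) (simp_all add: Sd_def algebra_simps sum_distrib_left)

lemma Sd_zero_left: "(\<And>u. f u = 0) \<Longrightarrow> Sd \<delta> \<gamma> f g = 0"
  by (cases \<delta>) (simp_all add: Sd_def)

lemma Sd_zero_right: "(\<And>u. g u = 0) \<Longrightarrow> Sd \<delta> \<gamma> f g = 0"
  by (cases \<delta>) (simp_all add: Sd_def)

lemma Sd_frob:
  assumes gc: "gcond \<delta> \<gamma>" and pf: "per_t f" and pg: "per_t g" and pf': "per_t f'" and pg': "per_t g'"
    and sf: "\<And>u. f' (Suc u) = f u ^ q" and sg: "\<And>u. g' (Suc u) = g u ^ q"
  shows "Sd \<delta> \<gamma> f' g' = Sd \<delta> \<gamma> f g ^ q"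
proof -
  have s1: "(\<Sum>u<t. f' u) = (\<Sum>u<t. f u) ^ q"
    using psum1[OF pf'] sf frob_sum[of f "{..<t}" 1] by simp
  have s2: "(\<Sum>u<t. g' u) = (\<Sum>u<t. g u) ^ q"
    using psum1[OF pg'] sg frob_sum[of g "{..<t}" 1] by simp
  have pfg: "per_t (\<lambda>u. f' u * g' u)" using pf' pg' by (simp add: per_t_def)
  have s3: "(\<Sum>u<t. f' u * g' u) = (\<Sum>u<t. f u * g u) ^ q"
    using psum1[OF pfg] sf sg frob_sum[of "\<lambda>u. f u * g u" "{..<t}" 1] by (simp add: power_mult_distrib)
  show ?thesis
  proof (cases \<delta>)
    case DZero thus ?thesis using s3 by (simp add: Sd_def)
  next
    case DStar thus ?thesis using s1 s2 s3 by (simp add: Sd_def frob1_diff power_mult_distrib)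
  next
    case DGammaH
    have gt: "\<gamma> ^ (q ^ t) = \<gamma>" using gc DGammaH by (simp add: gcond_def)
    let ?h = "\<lambda>u. \<gamma> ^ (q ^ u) * f' u * g' (u + t div 2)"
    have ph: "per_t ?h"
      unfolding per_t_def
    proof
      fix u
      have "\<gamma> ^ (q ^ (u + t)) = \<gamma> ^ (q ^ u)"
        using gt by (simp add: power_add power_mult mult.commute)
      moreover have "f' (u + t) = f' u" "g' (u + t + t div 2) = g' (u + t div 2)"
        using pf' pg' unfolding per_t_def by (auto simp: ac_simps)
      ultimately show "?h (u + t) = ?h u" by simp
    qed
    have "(\<Sum>u<t. ?h u) = (\<Sum>u<t. ?h (Suc u))" by (rule psum1[OF ph, symmetric])
    also have "\<dots> = (\<Sum>u<t. (\<gamma> ^ (q ^ u) * f u * g (u + t div 2)) ^ q)"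
    proof (rule sum.cong[OF refl])
      fix u
      have "g' (Suc u + t div 2) = g (u + t div 2) ^ q" using sg[of "u + t div 2"] by simp
      thus "?h (Suc u) = (\<gamma> ^ (q ^ u) * f u * g (u + t div 2)) ^ q"
        by (simp add: sf power_mult_distrib power_mult[symmetric] mult.commute)
    qed
    also have "\<dots> = (\<Sum>u<t. \<gamma> ^ (q ^ u) * f u * g (u + t div 2)) ^ q"
      using frob_sum[of "\<lambda>u. \<gamma> ^ (q ^ u) * f u * g (u + t div 2)" "{..<t}" 1] by simp
    finally show ?thesis using DGammaH by (simp add: Sd_def)
  qed
qed

lemma Sd_swap:
  assumes gc: "gcond \<delta> \<gamma>" and pf: "per_t f" and pg: "per_t g"
  shows "Sd \<delta> \<gamma> g f = sgnd \<delta> * Sd \<delta> \<gamma> f g"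
proof (cases \<delta>)
  case DZero thus ?thesis by (simp add: Sd_def sgnd_def mult.commute)
next
  case DStar thus ?thesis by (simp add: Sd_def sgnd_def mult.commute)
next
  case DGammaH
  have gt: "\<gamma> ^ (q ^ t) = \<gamma>" and gs: "\<gamma> ^ (q ^ (t div 2)) = - \<gamma>" and ev: "even t"
    using gc DGammaH by (auto simp: gcond_def)
  define s where "s = t div 2"
  have ts: "t = s + s" using ev unfolding s_def by presburger
  let ?h = "\<lambda>u. \<gamma> ^ (q ^ u) * g u * f (u + s)"
  have ph: "per_t ?h"
    unfolding per_t_def
  proof
    fix u
    have "\<gamma> ^ (q ^ (u + t)) = \<gamma> ^ (q ^ u)"
      using gt by (simp add: power_add power_mult mult.commute)
    moreover have "g (u + t) = g u" using pg unfolding per_t_def by blast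
    moreover have "f ((u + s) + t) = f (u + s)" using pf unfolding per_t_def by blast
    hence "f (u + t + s) = f (u + s)" by (simp add: ac_simps)
    ultimately show "?h (u + t) = ?h u" by simp
  qed
  have "(\<Sum>u<t. ?h u) = (\<Sum>u<t. ?h (u + s))" by (rule psum[OF ph, symmetric])
  also have "\<dots> = (\<Sum>u<t. - (\<gamma> ^ (q ^ u) * f u * g (u + s)))"
  proof (rule sum.cong[OF refl])
    fix u
    have "\<gamma> ^ (q ^ (u + s)) = (\<gamma> ^ (q ^ s)) ^ (q ^ u)"
      by (simp add: power_add power_mult[symmetric] mult.commute)
    also have "\<dots> = - (\<gamma> ^ (q ^ u))" using gs frob_neg by (simp add: s_def)
    finally have g1: "\<gamma> ^ (q ^ (u + s)) = - (\<gamma> ^ (q ^ u))" .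
    have "f (u + s + s) = f u" using pf ts unfolding per_t_def by (metis add.assoc)
    thus "?h (u + s) = - (\<gamma> ^ (q ^ u) * f u * g (u + s))" using g1 by (simp add: ac_simps)
  qed
  finally show ?thesis using DGammaH by (simp add: Sd_def sgnd_def s_def sum_negf)
qed

end


context base begin

lemma mu_props:
  assumes reps: "cyc_reps q n ls" and i: "i < length ls"
  shows "mu q n ls i < length ls \<and> cyc q n (- int (ls ! i)) = cyc q n (int (ls ! (mu q n ls i)))"
proof -
  let ?P = "\<lambda>j. j < length ls \<and> cyc q n (- int (ls ! i)) = cyc q n (int (ls ! j))"
  have x0: "nat ((- int (ls ! i)) mod int n) < n" using n1 by (simp add: nat_less_iff)
  then obtain j where j: "j < length ls" "nat ((- int (ls ! i)) mod int n) \<in> cyc q n (int (ls ! j))"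
    using reps unfolding cyc_reps_def by blast
  have "inC (int (ls ! j)) (- int (ls ! i))" using j(2) by (simp add: inC_def)
  hence Pj: "?P j" using j(1) cyc_eq by blast
  have uniq: "\<And>j'. ?P j' \<Longrightarrow> j' = j"
  proof (rule ccontr)
    fix j' assume "?P j'" "j' \<noteq> j"
    hence "cyc q n (int (ls ! j')) = cyc q n (int (ls ! j))" using Pj by simp
    thus False using reps \<open>?P j'\<close> j(1) \<open>j' \<noteq> j\<close> unfolding cyc_reps_def by blast
  qed
  have "mu q n ls i = j" unfolding mu_def using Pj uniq by (rule the_equality)
  thus ?thesis using Pj by simp
qed

end

locale hs = base p q kk n t N \<eta> for p q kk n t N :: nat and \<eta> :: "'b::{field,finite}" +
  fixes ls :: "nat list" and h :: nat and \<delta> :: delta and \<gamma> :: "'b::{field,finite}"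
  assumes reps: "cyc_reps q n ls" and hlt: "h < length ls" and muh: "mu q n ls h \<noteq> h"
    and gc: "gcond \<delta> \<gamma>"
begin

abbreviation "lh \<equiv> int (ls ! h)"
abbreviation "mh \<equiv> mu q n ls h"
abbreviation "B \<equiv> Bf \<delta> \<gamma>"

lemma mh: "mh < length ls" "cyc q n (- lh) = cyc q n (int (ls ! mh))"
  using mu_props[OF reps hlt] by auto

lemma disj: "inC lh j \<Longrightarrow> \<not> inC (- lh) j"
proof
  assume a: "inC lh j" "inC (- lh) j"
  have "cyc q n j = cyc q n lh" using cyc_eq[OF a(1)] .
  moreover have "cyc q n j = cyc q n (- lh)" using cyc_eq[OF a(2)] .
  ultimately have "cyc q n (int (ls ! h)) = cyc q n (int (ls ! mh))" using mh by simp
  thus False using reps hlt mh(1) muh unfolding cyc_reps_def by blast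
qed

lemma inC_mh: "inC (int (ls ! mh)) j \<longleftrightarrow> inC (- lh) j"
  using mh(2) by (simp add: inC_def)

lemma al_zero: "good t l x \<Longrightarrow> \<not> inC l k \<Longrightarrow> al x k u = 0"
proof -
  assume g: "good t l x" and k: "\<not> inC l k"
  have "\<not> inC l (k * int qi ^ u)" using k inC_divqi by blast
  thus ?thesis using g qpos unfolding good_def al_def by simp
qed

lemma be_zero: "good t l y \<Longrightarrow> \<not> inC l (- k) \<Longrightarrow> be y k u = 0"
proof -
  assume g: "good t l y" and k: "\<not> inC l (- k)"
  have "\<not> inC l ((- k) * int qi ^ u)" using k inC_divqi by blast
  thus ?thesis using g qpos unfolding good_def be_def by simp
qed

lemma deg_B: "degree (B x y) < n"
  by (cases \<delta>) (simp_all add: Bf_def form0_def formstar_def formgamma_def deg_sum_tau)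

lemma frt_add: "frt x \<Longrightarrow> frt y \<Longrightarrow> frt (x + y)"
  unfolding frt_def by (simp add: E_add frob_add)

lemma B_self_zero:
  assumes gx: "good t l x" and gy: "good t l y" and sep: "\<And>k. inC l k \<Longrightarrow> \<not> inC l (- k)"
  shows "B x y = 0"
proof (rule E_inj_all[OF deg_B])
  fix k
  have fy: "frt y" using gy by (rule frt_good)
  have dy: "degree y < n" using gy by (simp add: good_def)
  show "E (B x y) k = 0" unfolding E_Bf[OF dy fy]
  proof (cases "inC l k")
    case True
    hence "\<And>u. be y k u = 0" using be_zero[OF gy] sep by blast
    thus "Sd \<delta> \<gamma> (al x k) (be y k) = 0" by (rule Sd_zero_right)
  next
    case False
    hence "\<And>u. al x k u = 0" using al_zero[OF gx] by blast
    thus "Sd \<delta> \<gamma> (al x k) (be y k) = 0" by (rule Sd_zero_left)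
  qed
qed

lemma BA_zero: "good t lh a \<Longrightarrow> good t lh a' \<Longrightarrow> B a a' = 0"
  by (rule B_self_zero) (use disj inC_neg in auto)

lemma BB_zero: "good t (- lh) b \<Longrightarrow> good t (- lh) b' \<Longrightarrow> B b b' = 0"
proof (rule B_self_zero)
  fix k assume "inC (- lh) k"
  hence "inC lh (- k)" using inC_neg[of "- lh" k] by simp
  thus "\<not> inC (- lh) (- k)" by (rule disj)
qed

lemma B_off: "good t l x \<Longrightarrow> degree y < n \<Longrightarrow> frt y \<Longrightarrow> \<not> inC l k \<Longrightarrow> E (B x y) k = 0"
  using al_zero E_Bf Sd_zero_left by metis

lemma B_frob:
  assumes fx: "frt x" and dy: "degree y < n" and fy: "frt y"
  shows "E (B x y) (k * int q) = E (B x y) k ^ q"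
  unfolding E_Bf[OF dy fy]
  by (rule Sd_frob[OF gc al_per[OF fx] be_per[OF fy] al_per[OF fx] be_per[OF fy] al_shift be_shift])

lemma al_neg_f: "al x (- k) = be x k" by (rule ext) (simp add: al_neg)
lemma be_neg_f: "be x (- k) = al x k" by (rule ext) (simp add: be_neg)
lemma al_add_f: "al (x + y) k = (\<lambda>u. al x k u + al y k u)" by (rule ext) (simp add: al_add)
lemma be_add_f: "be (x + y) k = (\<lambda>u. be x k u + be y k u)" by (rule ext) (simp add: be_add)

lemma B_swap:
  assumes dx: "degree x < n" and fx: "frt x" and dy: "degree y < n" and fy: "frt y"
  shows "E (B y x) (- k) = sgnd \<delta> * E (B x y) k"
proof -
  have "E (B y x) (- k) = Sd \<delta> \<gamma> (al y (- k)) (be x (- k))" by (rule E_Bf[OF dx fx])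
  also have "\<dots> = Sd \<delta> \<gamma> (be y k) (al x k)" by (simp only: al_neg_f be_neg_f)
  also have "\<dots> = sgnd \<delta> * Sd \<delta> \<gamma> (al x k) (be y k)"
    by (rule Sd_swap[OF gc al_per[OF fx] be_per[OF fy]])
  also have "\<dots> = sgnd \<delta> * E (B x y) k" by (simp add: E_Bf[OF dy fy])
  finally show ?thesis .
qed

lemma sgnd_nz: "sgnd \<delta> \<noteq> 0" by (simp add: sgnd_def)

lemma B_add_right:
  assumes d1: "degree y1 < n" "frt y1" and d2: "degree y2 < n" "frt y2"
  shows "E (B x (y1 + y2)) k = E (B x y1) k + E (B x y2) k"
proof -
  have "E (B x (y1 + y2)) k = Sd \<delta> \<gamma> (al x k) (be (y1 + y2) k)"
    by (rule E_Bf) (use d1 d2 frt_add in \<open>auto intro: degree_add_less\<close>)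
  also have "\<dots> = Sd \<delta> \<gamma> (al x k) (\<lambda>u. be y1 k u + be y2 k u)" by (simp only: be_add_f)
  also have "\<dots> = E (B x y1) k + E (B x y2) k"
    by (simp add: Sd_add_right E_Bf[OF d1] E_Bf[OF d2])
  finally show ?thesis .
qed

lemma B_add_left:
  assumes d: "degree y < n" "frt y"
  shows "E (B (x1 + x2) y) k = E (B x1 y) k + E (B x2 y) k"
  by (simp add: E_Bf[OF d] al_add_f Sd_add_left)

lemma frt_rmult: "good 1 l c \<Longrightarrow> frt y \<Longrightarrow> frt (rmult n c y)"
proof -
  assume c: "good 1 l c" and y: "frt y"
  have "good t l c" using c by (rule good1_iter)
  thus ?thesis using y unfolding frt_def good_def by (simp add: E_rmult power_mult_distrib)
qed

lemma B_scale:
  assumes c: "good 1 l c" and dy: "degree y < n" and fy: "frt y"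
  shows "E (B x (rmult n c y)) k = E c (- k) * E (B x y) k"
proof -
  have "E (B x (rmult n c y)) k = Sd \<delta> \<gamma> (al x k) (be (rmult n c y) k)"
    by (rule E_Bf[OF deg_rmult frt_rmult[OF c fy]])
  also have "be (rmult n c y) k = (\<lambda>u. E c (- k) * be y k u)"
  proof
    fix u
    have "E c (- (k * int qi ^ u)) ^ (q ^ u) = E c (- (k * int qi ^ u) * int q ^ u)"
      using good1_iter[OF c, of u] unfolding good_def by (metis (no_types))
    also have "\<dots> = E c (- k)"
      by (rule E_cong) (use qinv[of "- k" u] in \<open>simp add: ac_simps\<close>)
    finally show "be (rmult n c y) k u = E c (- k) * be y k u"
      by (simp add: be_def E_rmult power_mult_distrib)
  qed
  also have "Sd \<delta> \<gamma> (al x k) (\<lambda>u. E c (- k) * be y k u) = E c (- k) * E (B x y) k"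
    by (simp add: Sd_scale E_Bf[OF dy fy])
  finally show ?thesis .
qed

lemma good1_nz_at:
  assumes g: "good 1 l x" and k: "inC l k" and z: "E x k = 0"
  shows "x = 0"
proof -
  obtain i where i: "k mod int n = (l * int q ^ i) mod int n" using k by (auto simp: inC_iff)
  have "E x k = E x (l * int q ^ i)" by (rule E_cong[OF i])
  also have "\<dots> = E x l ^ (q ^ i)" using good1_iter[OF g, of i] unfolding good_def by simp
  finally have "E x l = 0" using z by simp
  thus ?thesis by (rule good1_zero[OF g])
qed

end


context base begin

lemma good_cyc: "cyc q n l = cyc q n l' \<Longrightarrow> good m l x \<longleftrightarrow> good m l' x"
proof -
  assume c: "cyc q n l = cyc q n l'"
  have e: "inC l = inC l'" by (rule ext) (rule inC_cyc_iff[OF c])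
  show ?thesis unfolding good_def e ..
qed

lemma Kid_diff: "x \<in> Kid q n \<eta> ls i \<Longrightarrow> y \<in> Kid q n \<eta> ls i \<Longrightarrow> x - y \<in> Kid q n \<eta> ls i"
proof -
  assume "x \<in> Kid q n \<eta> ls i" "y \<in> Kid q n \<eta> ls i"
  then obtain c c' where c: "c \<in> Rn q n" "x = rmult n c (xn1 n div fpoly q n \<eta> ls i)"
    and c': "c' \<in> Rn q n" "y = rmult n c' (xn1 n div fpoly q n \<eta> ls i)" by (auto simp: Kid_def)
  have "x - y = rmult n (c - c') (xn1 n div fpoly q n \<eta> ls i)"
    unfolding c(2) c'(2) rmult_def by (simp add: left_diff_distrib poly_mod_diff_left)
  moreover have "c - c' \<in> Rn q n"
    using c(1) c'(1) unfolding Rn_def Fq_def by (auto simp: degree_diff_less frob1_diff)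
  ultimately show ?thesis by (auto simp: Kid_def)
qed

lemma K_image_at:
  assumes l0: "inC (int (ls ! i)) l0"
  shows "(\<lambda>x. E x l0) ` Kid q n \<eta> ls i = Fd (card (cyc q n (int (ls ! i))))"
proof -
  define K where "K = Kid q n \<eta> ls i"
  define l where "l = int (ls ! i)"
  have cyceq: "cyc q n l0 = cyc q n l" using cyc_eq[OF l0] by (simp add: l_def)
  have good: "\<And>x. x \<in> K \<Longrightarrow> good 1 l0 x" using Kid_good good_cyc[OF cyceq] K_def l_def by blast
  have inj: "inj_on (\<lambda>x. E x l0) K"
  proof (rule inj_onI)
    fix x y assume xy: "x \<in> K" "y \<in> K" "E x l0 = E y l0"
    have "good 1 l0 (x - y)" using good xy by (simp add: good_diff)
    moreover have "E (x - y) l0 = 0" using xy by (simp add: E_diff)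
    ultimately have "x - y = 0" by (rule good1_zero)
    thus "x = y" by simp
  qed
  have sub: "(\<lambda>x. E x l0) ` K \<subseteq> Fd (card (cyc q n l))"
    using E_in_Fd good cyceq by fastforce
  have "card ((\<lambda>x. E x l0) ` K) = q ^ card (cyc q n l)"
    using inj K_props(2)[of ls i] by (simp add: card_image K_def l_def)
  moreover have "card (Fd (card (cyc q n l))) = q ^ card (cyc q n l)"
    using K_props(4)[of ls i] by (simp add: l_def)
  ultimately have "(\<lambda>x. E x l0) ` K = Fd (card (cyc q n l))"
    using sub by (intro card_subset_eq) auto
  thus ?thesis by (simp add: K_def l_def)
qed

lemma Fd_div: "z \<in> Fd d \<Longrightarrow> u \<in> Fd d \<Longrightarrow> z / u \<in> Fd d"
  by (simp add: Fd_def power_divide)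

lemma sum_closed:
  assumes "0 \<in> A" "\<And>x y. x \<in> A \<Longrightarrow> y \<in> A \<Longrightarrow> x + y \<in> A" "\<And>i. i \<in> I \<Longrightarrow> f i \<in> A"
  shows "sum f I \<in> A"
  using assms by (induct I rule: infinite_finite_induct) auto

lemma rmult_diff_left: "rmult n (c - c') x = rmult n c x - rmult n c' x"
  unfolding rmult_def by (simp add: left_diff_distrib poly_mod_diff_left)

lemma card_kdim:
  assumes finK: "finite K" and Kd: "\<And>x y. x \<in> K \<Longrightarrow> y \<in> K \<Longrightarrow> x - y \<in> K"
    and sub: "ksubspace n K J A" and kd: "kdim n K A r"
  shows "card A = card K ^ r"
proof -
  obtain bs where bs: "length bs = r" "set bs \<subseteq> A"
    and ind: "\<forall>cs. length cs = r \<and> set cs \<subseteq> K \<and> (\<Sum>i<r. rmult n (cs ! i) (bs ! i)) = 0 \<longrightarrow> (\<forall>i<r. cs ! i = 0)"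
    and span: "\<forall>a\<in>A. \<exists>cs. length cs = r \<and> set cs \<subseteq> K \<and> a = (\<Sum>i<r. rmult n (cs ! i) (bs ! i))"
    using kd unfolding kdim_def by blast
  define L where "L = {cs. set cs \<subseteq> K \<and> length cs = r}"
  define \<Lambda> where "\<Lambda> cs = (\<Sum>i<r. rmult n (cs ! i) (bs ! i))" for cs
  have A0: "0 \<in> A" and Aadd: "\<And>x y. x \<in> A \<Longrightarrow> y \<in> A \<Longrightarrow> x + y \<in> A"
    and Amul: "\<And>c x. c \<in> K \<Longrightarrow> x \<in> A \<Longrightarrow> rmult n c x \<in> A"
    using sub unfolding ksubspace_def by auto
  have img: "\<Lambda> ` L = A"
  proof
    show "\<Lambda> ` L \<subseteq> A"
    proof
      fix y assume "y \<in> \<Lambda> ` L"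
      then obtain cs where cs: "cs \<in> L" "y = \<Lambda> cs" by auto
      have "(\<Sum>i<r. rmult n (cs ! i) (bs ! i)) \<in> A"
        by (rule sum_closed[where A=A, OF A0 Aadd]) (use cs(1) bs in \<open>auto intro!: Amul simp: L_def\<close>)
      thus "y \<in> A" unfolding cs(2) \<Lambda>_def .
    qed
    show "A \<subseteq> \<Lambda> ` L" using span by (force simp: L_def \<Lambda>_def)
  qed
  have inj: "inj_on \<Lambda> L"
  proof (rule inj_onI)
    fix cs cs' assume a: "cs \<in> L" "cs' \<in> L" "\<Lambda> cs = \<Lambda> cs'"
    define ds where "ds = map (\<lambda>i. cs ! i - cs' ! i) [0..<r]"
    have lds: "length ds = r" by (simp add: ds_def)
    have dsi: "\<And>i. i < r \<Longrightarrow> ds ! i = cs ! i - cs' ! i" by (simp add: ds_def)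
    have sK: "set ds \<subseteq> K"
    proof
      fix z assume "z \<in> set ds"
      then obtain i where "i < r" "z = cs ! i - cs' ! i" by (auto simp: ds_def)
      note this
      have s1: "set cs \<subseteq> K" "length cs = r" "set cs' \<subseteq> K" "length cs' = r" using a(1,2) by (auto simp: L_def)
      have "cs ! i \<in> K" using subsetD[OF s1(1) nth_mem] \<open>i < r\<close> s1(2) by simp
      moreover have "cs' ! i \<in> K" using subsetD[OF s1(3) nth_mem] \<open>i < r\<close> s1(4) by simp
      ultimately show "z \<in> K" using Kd \<open>z = _\<close> by simp
    qed
    have "(\<Sum>i<r. rmult n (ds ! i) (bs ! i)) = \<Lambda> cs - \<Lambda> cs'"
      by (simp add: \<Lambda>_def dsi rmult_diff_left sum_subtractf)
    hence "(\<Sum>i<r. rmult n (ds ! i) (bs ! i)) = 0" using a(3) by simp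
    hence "\<forall>i<r. ds ! i = 0" using ind lds sK by blast
    hence "\<And>i. i < r \<Longrightarrow> cs ! i = cs' ! i" using dsi by simp
    thus "cs = cs'" using a(1,2) by (intro nth_equalityI) (auto simp: L_def)
  qed
  have "card A = card L" using img inj by (metis card_image)
  also have "\<dots> = card K ^ r" unfolding L_def by (rule card_lists_length_eq[OF finK])
  finally show ?thesis .
qed

end

context hs begin

lemma val_in_Fd:
  assumes fa: "frt a" and db: "degree b < n" and fb: "frt b"
  shows "E (B a b) lh \<in> Fd (card (cyc q n lh))"
proof -
  have "E (B a b) (lh * int q ^ m) = E (B a b) lh ^ (q ^ m)" for m
    by (rule frob_iter) (rule B_frob[OF fa db fb])
  hence "E (B a b) lh ^ (q ^ card (cyc q n lh)) = E (B a b) (lh * int q ^ card (cyc q n lh))" by simp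
  also have "\<dots> = E (B a b) lh" by (rule E_cong[OF cyc_period])
  finally show ?thesis by (simp add: Fd_def)
qed

lemma B_zero_iff:
  assumes ga: "good t lh a" and db: "degree b < n" and fb: "frt b"
  shows "B a b = 0 \<longleftrightarrow> E (B a b) lh = 0"
proof
  assume "E (B a b) lh = 0"
  show "B a b = 0"
  proof (rule zero_from_l[OF deg_B])
    show "\<And>j. \<not> inC lh j \<Longrightarrow> E (B a b) j = 0" using B_off[OF ga db fb] .
    show "\<And>j. E (B a b) (j * int q) = E (B a b) j ^ q" using B_frob[OF frt_good[OF ga] db fb] .
  qed fact
qed (simp add: E_zero)

lemma B_swap_zero:
  assumes ga: "good t lh a" and gb: "good t (- lh) b" and z: "B a b = 0"
  shows "B b a = 0"
proof -
  have da: "degree a < n" and fa: "frt a" using ga frt_good by (auto simp: good_def)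
  have db: "degree b < n" and fb: "frt b" using gb frt_good by (auto simp: good_def)
  show ?thesis
  proof (rule zero_from_l[OF deg_B])
    show "\<And>j. \<not> inC (- lh) j \<Longrightarrow> E (B b a) j = 0" using B_off[OF gb da fa] .
    show "\<And>j. E (B b a) (j * int q) = E (B b a) j ^ q" using B_frob[OF fb da fa] .
    show "E (B b a) (- lh) = 0" using B_swap[OF da fa db fb, of lh] z by (simp add: E_zero)
  qed
qed

lemma E_B_sum:
  assumes ga: "good t lh a" and gb: "good t (- lh) b"
  shows "E (B (a + b) (a + b)) k = E (B a b) k + E (B b a) k"
proof -
  have da: "degree a < n" and fa: "frt a" using ga frt_good by (auto simp: good_def)
  have db: "degree b < n" and fb: "frt b" using gb frt_good by (auto simp: good_def)
  have dab: "degree (a + b) < n" using da db by (simp add: degree_add_less)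
  have fab: "frt (a + b)" using fa fb by (rule frt_add)
  have "E (B (a + b) (a + b)) k = E (B a (a + b)) k + E (B b (a + b)) k"
    by (rule B_add_left[OF dab fab])
  also have "\<dots> = (E (B a a) k + E (B a b) k) + (E (B b a) k + E (B b b) k)"
    by (simp add: B_add_right[OF da fa db fb])
  also have "\<dots> = E (B a b) k + E (B b a) k"
    using BA_zero[OF ga ga] BB_zero[OF gb gb] by (simp add: E_zero)
  finally show ?thesis .
qed

lemma BB_iff:
  assumes ga: "good t lh a" and gb: "good t (- lh) b"
  shows "B (a + b) (a + b) = 0 \<longleftrightarrow> B a b = 0"
proof -
  have da: "degree a < n" and fa: "frt a" using ga frt_good by (auto simp: good_def)
  have db: "degree b < n" and fb: "frt b" using gb frt_good by (auto simp: good_def)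
  show ?thesis
  proof
    assume z: "B (a + b) (a + b) = 0"
    show "B a b = 0"
    proof (rule E_inj_all[OF deg_B])
      fix k
      have s: "E (B a b) k + E (B b a) k = 0" using E_B_sum[OF ga gb, of k] z by (simp add: E_zero)
      show "E (B a b) k = 0"
      proof (cases "inC lh k")
        case True
        hence "E (B b a) k = 0" using B_off[OF gb da fa] disj by blast
        thus ?thesis using s by simp
      next
        case False thus ?thesis using B_off[OF ga db fb] by blast
      qed
    qed
  next
    assume z: "B a b = 0"
    have z2: "B b a = 0" by (rule B_swap_zero[OF ga gb z])
    show "B (a + b) (a + b) = 0"
      by (rule E_inj_all[OF deg_B]) (simp add: E_B_sum[OF ga gb] z z2 E_zero)
  qed
qed

definition "hcond \<theta> \<longleftrightarrow> (\<delta> = DGammaH \<longrightarrow> good 1 lh \<theta> \<and> \<theta> \<noteq> 0)"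

lemma bform_B: "\<delta> \<noteq> DGammaH \<Longrightarrow> bform \<delta> q t n \<gamma> \<theta> x y = B x y"
  by (cases \<delta>) (simp_all add: bform_def Bf_def)

lemma bform_H: "\<delta> = DGammaH \<Longrightarrow> bform \<delta> q t n \<gamma> \<theta> x y = rmult n (\<theta> - tau q n 0 (-1) \<theta>) (B x y)"
  by (simp add: bform_def Bf_def formH_def)

lemma rmult_zero: "rmult n c 0 = 0" by (simp add: rmult_def)

lemma chi_nz:
  assumes g: "good 1 lh \<theta>" and nz: "\<theta> \<noteq> 0" and k: "inC lh k \<or> inC (- lh) k"
  shows "E (\<theta> - tau q n 0 (-1) \<theta>) k \<noteq> 0"
proof -
  have d: "degree \<theta> < n" using g by (simp add: good_def)
  have e: "E (\<theta> - tau q n 0 (-1) \<theta>) k = E \<theta> k - E \<theta> (- k)"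
    by (simp add: E_diff E_taum[OF d])
  show ?thesis
  proof (cases "inC lh k")
    case True
    have "\<not> inC lh (- k)" using disj True inC_neg by blast
    hence "E \<theta> (- k) = 0" using g by (simp add: good_def)
    moreover have "E \<theta> k \<noteq> 0" using good1_nz_at[OF g True] nz by blast
    ultimately show ?thesis using e by simp
  next
    case False
    hence k2: "inC (- lh) k" using k by simp
    have "E \<theta> k = 0" using g False by (simp add: good_def)
    moreover have "inC lh (- k)" using k2 inC_neg[of lh "- k"] by simp
    hence "E \<theta> (- k) \<noteq> 0" using good1_nz_at[OF g] nz by blast
    ultimately show ?thesis using e by simp
  qed
qed

lemma iso_iff:
  assumes ga: "good t lh a" and gb: "good t (- lh) b" and hc: "hcond \<theta>"
  shows "bform \<delta> q t n \<gamma> \<theta> (a + b) (a + b) = 0 \<longleftrightarrow> E (B a b) lh = 0"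
proof -
  have db: "degree b < n" and fb: "frt b" using gb frt_good by (auto simp: good_def)
  have hc': "\<delta> = DGammaH \<longrightarrow> good 1 lh \<theta> \<and> \<theta> \<noteq> 0" using hc by (simp add: hcond_def)
  have "bform \<delta> q t n \<gamma> \<theta> (a + b) (a + b) = 0 \<longleftrightarrow> B (a + b) (a + b) = 0"
  proof (cases "\<delta> = DGammaH")
    case False thus ?thesis by (simp add: bform_B)
  next
    case True
    have g: "good 1 lh \<theta>" and nz: "\<theta> \<noteq> 0" using hc' True by auto
    have bH: "\<And>x y. bform \<delta> q t n \<gamma> \<theta> x y = rmult n (\<theta> - tau q n 0 (-1) \<theta>) (B x y)"
      using True by (rule bform_H)
    show ?thesis
    proof
      assume z: "bform \<delta> q t n \<gamma> \<theta> (a + b) (a + b) = 0"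
      show "B (a + b) (a + b) = 0"
      proof (rule E_inj_all[OF deg_B])
        fix k
        have p: "E (\<theta> - tau q n 0 (-1) \<theta>) k * E (B (a + b) (a + b)) k = 0"
          using z unfolding bH by (simp add: E_rmult[symmetric] E_zero)
        show "E (B (a + b) (a + b)) k = 0"
        proof (cases "inC lh k \<or> inC (- lh) k")
          case True thus ?thesis using p chi_nz[OF g nz] by simp
        next
          case False
          have da: "degree a < n" and fa: "frt a" using ga frt_good by (auto simp: good_def)
          have "E (B a b) k = 0" using B_off[OF ga db fb] False by blast
          moreover have "E (B b a) k = 0" using B_off[OF gb da fa] False by blast
          ultimately show ?thesis by (simp add: E_B_sum[OF ga gb])
        qed
      qed
    next
      assume "B (a + b) (a + b) = 0"
      thus "bform \<delta> q t n \<gamma> \<theta> (a + b) (a + b) = 0" unfolding bH by (simp add: rmult_zero)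
    qed
  qed
  also have "\<dots> \<longleftrightarrow> B a b = 0" by (rule BB_iff[OF ga gb])
  also have "\<dots> \<longleftrightarrow> E (B a b) lh = 0" by (rule B_zero_iff[OF ga db fb])
  finally show ?thesis .
qed

lemma nondeg_use:
  assumes ga: "good t lh a" and ga': "good t lh a'" and gb: "good t (- lh) b'"
    and z: "E (B a b') lh = 0"
  shows "bform \<delta> q t n \<gamma> \<theta> a (a' + b') = 0"
proof -
  have da': "degree a' < n" and fa': "frt a'" using ga' frt_good by (auto simp: good_def)
  have db: "degree b' < n" and fb: "frt b'" using gb frt_good by (auto simp: good_def)
  have z1: "B a b' = 0" using B_zero_iff[OF ga db fb] z by simp
  have z2: "B a a' = 0" by (rule BA_zero[OF ga ga'])
  have "B a (a' + b') = 0"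
    by (rule E_inj_all[OF deg_B]) (simp add: B_add_right[OF da' fa' db fb] z1 z2 E_zero)
  show ?thesis
  proof (cases "\<delta> = DGammaH")
    case True
    show ?thesis unfolding bform_H[OF True] \<open>B a (a' + b') = 0\<close> by (rule rmult_zero)
  next
    case False
    show ?thesis unfolding bform_B[OF False] by fact
  qed
qed

end


context hs begin

lemma B_zero_right: "B x 0 = 0"
proof (rule E_inj_all[OF deg_B])
  fix k
  have f0: "frt 0" by (simp add: frt_def E_zero qpos)
  have d0: "degree (0::'b poly) < n" using n1 by simp
  have "be 0 k = (\<lambda>u. 0)" by (rule ext) (simp add: be_def E_zero qpos)
  moreover have "E (B x 0) k = Sd \<delta> \<gamma> (al x k) (be 0 k)" by (rule E_Bf[OF d0 f0])
  ultimately show "E (B x 0) k = 0" by (simp add: Sd_zero_right)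
qed

lemma good_mh: "x \<in> Jid q t n \<eta> ls mh \<Longrightarrow> good t (- lh) x"
  using Jid_good[of x ls mh] good_cyc[OF mh(2)] by simp

lemma card_cyc_mh: "card (cyc q n (int (ls ! mh))) = card (cyc q n lh)"
  using mh(2) card_cyc_neg[of lh] by simp

lemma count_a:
  assumes V: "ksubspace n (Kid q n \<eta> ls mh) (Jid q t n \<eta> ls mh) V"
    and finV: "finite V" and cV: "card V = q ^ (card (cyc q n lh) * r)" and r1: "r \<ge> 1"
    and ga: "good t lh a" and wit: "\<exists>b0\<in>V. E (B a b0) lh \<noteq> 0"
  shows "card {b\<in>V. E (B a b) lh = 0} = q ^ (card (cyc q n lh) * (r - 1))"
proof -
  define d where "d = card (cyc q n lh)"
  define F where "F b = E (B a b) lh" for b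
  have V0: "0 \<in> V" and Vadd: "\<And>x y. x \<in> V \<Longrightarrow> y \<in> V \<Longrightarrow> x + y \<in> V"
    and Vmul: "\<And>c x. c \<in> Kid q n \<eta> ls mh \<Longrightarrow> x \<in> V \<Longrightarrow> rmult n c x \<in> V"
    and VJ: "V \<subseteq> Jid q t n \<eta> ls mh"
    using V unfolding ksubspace_def by auto
  have gV: "\<And>b. b \<in> V \<Longrightarrow> good t (- lh) b" using VJ good_mh by blast
  have dV: "\<And>b. b \<in> V \<Longrightarrow> degree b < n" using gV by (simp add: good_def)
  have fV: "\<And>b. b \<in> V \<Longrightarrow> frt b" using gV frt_good by blast
  have fa: "frt a" using ga frt_good by blast
  have hom: "\<And>x y. x \<in> V \<Longrightarrow> y \<in> V \<Longrightarrow> F (x + y) = F x + F y"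
    unfolding F_def using B_add_right dV fV by blast
  have ck: "card V = card {b\<in>V. F b = 0} * card (F ` V)"
    by (rule card_kernel[OF finV V0 Vadd hom])
  have img: "F ` V = Fd d"
  proof
    show "F ` V \<subseteq> Fd d" unfolding F_def d_def using val_in_Fd[OF fa] dV fV by blast
    show "Fd d \<subseteq> F ` V"
    proof
      fix z assume z: "z \<in> Fd d"
      obtain b0 where b0: "b0 \<in> V" "F b0 \<noteq> 0" using wit unfolding F_def by blast
      have u: "F b0 \<in> Fd d" unfolding F_def d_def using val_in_Fd[OF fa dV[OF b0(1)] fV[OF b0(1)]] .
      have zu: "z / F b0 \<in> Fd d" using Fd_div[OF z u] .
      have l0: "inC (int (ls ! mh)) (- lh)" using inC_l[of "- lh"] mh(2) by (simp add: inC_def)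
      have "(\<lambda>x. E x (- lh)) ` Kid q n \<eta> ls mh = Fd d"
        using K_image_at[OF l0] card_cyc_mh by (simp add: d_def)
      then obtain c where c: "c \<in> Kid q n \<eta> ls mh" "E c (- lh) = z / F b0" using zu by force
      have gc1: "good 1 (int (ls ! mh)) c" using c(1) by (rule Kid_good)
      have "F (rmult n c b0) = E c (- lh) * F b0"
        unfolding F_def by (rule B_scale[OF gc1 dV[OF b0(1)] fV[OF b0(1)]])
      also have "\<dots> = z" using c(2) b0(2) by simp
      finally show "z \<in> F ` V" using Vmul[OF c(1) b0(1)] by force
    qed
  qed
  have cF: "card (Fd d) = q ^ d" using K_props(4)[of ls h] by (simp add: d_def)
  have dr: "d * (r - 1) + d = d * r" using r1 by (cases r) (simp_all add: algebra_simps)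
  have e1: "q ^ (d * (r - 1)) * q ^ d = q ^ (d * r)"
    by (simp only: power_add[symmetric] dr)
  have "card {b\<in>V. F b = 0} * q ^ d = q ^ (d * r)"
    using ck cV img cF by (simp add: d_def)
  hence e2: "card {b\<in>V. F b = 0} * q ^ d = q ^ (d * (r - 1)) * q ^ d" using e1 by simp
  have "q ^ d \<noteq> 0" using qpos by simp
  hence "card {b\<in>V. F b = 0} = q ^ (d * (r - 1))" using e2 mult_right_cancel by blast
  thus ?thesis by (simp add: F_def d_def)
qed

lemma sum_inj:
  assumes "good t lh a" "good t lh a'" "good t (- lh) b" "good t (- lh) b'" and e: "a + b = a' + b'"
  shows "a = a' \<and> b = b'"
proof -
  have ga: "good t lh (a - a')" using assms good_diff by blast
  have gb: "good t (- lh) (b' - b)" using assms good_diff by blast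
  have eq: "a - a' = b' - b" using e by (simp add: algebra_simps)
  have "a - a' = 0"
  proof (rule E_inj_all)
    show "degree (a - a') < n" using ga by (simp add: good_def)
    fix k show "E (a - a') k = 0"
    proof (cases "inC lh k")
      case True
      hence "\<not> inC (- lh) k" by (rule disj)
      hence "E (b' - b) k = 0" using gb by (simp add: good_def)
      thus ?thesis using eq by simp
    next
      case False thus ?thesis using ga by (simp add: good_def)
    qed
  qed
  thus ?thesis using e by simp
qed

end


lemma gamma_facts:
  fixes q t :: nat and \<gamma> :: "'b::field"
  assumes t2: "t \<ge> 2" and ev: "even t"
    and gq: "\<gamma> \<in> Fq (q ^ (2 ^ multiplicity 2 t))"
    and gs: "\<gamma> + \<gamma> ^ (q ^ (2 ^ (multiplicity 2 t - 1))) = 0"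
    and fneg: "\<And>x::'b. \<And>m. (- x) ^ (q ^ m) = - (x ^ (q ^ m))"
  shows "\<gamma> ^ (q ^ t) = \<gamma> \<and> \<gamma> ^ (q ^ (t div 2)) = - \<gamma>"
proof -
  define e where "e = multiplicity 2 t"
  have t0: "t \<noteq> 0" using t2 by simp
  have nu: "\<not> is_unit (2::nat)" by simp
  obtain m where m: "t = 2 ^ e * m" "\<not> 2 dvd m"
    using multiplicity_decompose'[OF t0 nu] e_def by metis
  have e0: "e > 0" using multiplicity_gt_zero_iff[OF t0 nu] ev e_def by simp
  have g1: "\<gamma> ^ (q ^ (2 ^ e)) = \<gamma>" using gq by (simp add: Fq_def e_def)
  have A: "\<gamma> ^ (q ^ (2 ^ e * j)) = \<gamma>" for j
  proof (induction j)
    case 0 thus ?case by simp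
  next
    case (Suc j)
    have "\<gamma> ^ (q ^ (2 ^ e * Suc j)) = (\<gamma> ^ (q ^ (2 ^ e * j))) ^ (q ^ (2 ^ e))"
      by (simp add: power_add power_mult[symmetric] mult.commute)
    thus ?case using Suc g1 by simp
  qed
  have g2: "\<gamma> ^ (q ^ (2 ^ (e - 1))) = - \<gamma>" using gs by (simp add: e_def eq_neg_iff_add_eq_0 add.commute)
  have Bj: "\<gamma> ^ (q ^ (2 ^ (e - 1) * j)) = (if even j then \<gamma> else - \<gamma>)" for j
  proof (induction j)
    case 0 thus ?case by simp
  next
    case (Suc j)
    have "\<gamma> ^ (q ^ (2 ^ (e - 1) * Suc j)) = (\<gamma> ^ (q ^ (2 ^ (e - 1) * j))) ^ (q ^ (2 ^ (e - 1)))"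
      by (simp add: power_add power_mult[symmetric] mult.commute)
    also have "\<dots> = (if even j then - \<gamma> else \<gamma>)"
      using Suc g2 fneg[of \<gamma> "2 ^ (e - 1)"] by simp
    finally show ?case by simp
  qed
  have td: "t div 2 = 2 ^ (e - 1) * m"
  proof -
    have "t = 2 * (2 ^ (e - 1) * m)" using m(1) e0 by (cases e) simp_all
    thus ?thesis by simp
  qed
  show ?thesis using A[of m] Bj[of m] m td by simp
qed

theorem proposition3p8:
  fixes p q k n t N :: nat and \<eta> \<gamma> :: "'b::{field,finite}"
    and ls :: "nat list" and M :: "nat set" and h r :: nat
    and \<delta> :: delta and \<theta> :: "'b poly" and Ah Amh :: "'b poly set"
  assumes "prime p" and "k \<ge> 1" and "q = p ^ k"
    and "n \<ge> 1" and "coprime n q" and "t \<ge> 2"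
    and "card (UNIV :: 'b set) = q ^ N" and "t dvd N"
    and "primitive_root n \<eta>"
    and "cyc_reps q n ls"
    and "frakM q n ls M" and "h \<in> M"
    and "Tdelta \<delta> p t"
    and "\<delta> = DGammaH \<longrightarrow>
           \<gamma> \<noteq> 0 \<and> \<gamma> \<in> Fq (q ^ (2 ^ multiplicity 2 t)) \<and>
           \<gamma> + \<gamma> ^ (q ^ (2 ^ (multiplicity 2 t - 1))) = 0 \<and>
           \<theta> \<in> Kid q n \<eta> ls h \<and> \<theta> \<noteq> 0"
    and "ksubspace n (Kid q n \<eta> ls h) (Jid q t n \<eta> ls h) Ah"
    and "ksubspace n (Kid q n \<eta> ls (mu q n ls h)) (Jid q t n \<eta> ls (mu q n ls h)) Amh"
    and "kdim n (Kid q n \<eta> ls h) Ah r"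
    and "kdim n (Kid q n \<eta> ls (mu q n ls h)) Amh r"
    and "r \<ge> 2"
    and "\<forall>x\<in>dsum Ah Amh. x \<noteq> 0 \<longrightarrow>
           (\<exists>y\<in>dsum Ah Amh. bform \<delta> q t n \<gamma> \<theta> x y \<noteq> 0)"
  shows "card {a + b | a b. a \<in> Ah \<and> b \<in> Amh \<and> a \<noteq> 0 \<and> b \<noteq> 0 \<and>
                 bform \<delta> q t n \<gamma> \<theta> (a + b) (a + b) = 0}
         = (q ^ ((r - 1) * dd q n ls h) - 1) * (q ^ (r * dd q n ls h) - 1)"

proof -
  note a = assms
  interpret base p q k n t N \<eta>
    by (unfold_locales) (use a in auto)
  have fM: "M \<subseteq> {i. i < length ls \<and> mu q n ls i \<noteq> i}" using a(11) by (simp add: frakM_def)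
  have hlt: "h < length ls" and muh: "mu q n ls h \<noteq> h" using fM a(12) by auto
  have gc: "gcond \<delta> \<gamma>"
    unfolding gcond_def
  proof
    assume dg: "\<delta> = DGammaH"
    have ev: "even t" using a(13) dg by (simp add: Tdelta_def)
    have "\<gamma> \<in> Fq (q ^ (2 ^ multiplicity 2 t))" "\<gamma> + \<gamma> ^ (q ^ (2 ^ (multiplicity 2 t - 1))) = 0"
      using a(14) dg by auto
    from gamma_facts[OF a(6) ev this frob_neg] show "\<gamma> ^ (q ^ t) = \<gamma> \<and> \<gamma> ^ (q ^ (t div 2)) = - \<gamma> \<and> even t"
      using ev by simp
  qed
  interpret hs p q k n t N \<eta> ls h \<delta> \<gamma>
    by (unfold_locales) (use a(10) hlt muh gc in auto)
  define d where "d = card (cyc q n lh)"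
  have dd: "dd q n ls h = d" by (simp add: dd_def d_def)
  have hc: "hcond \<theta>" unfolding hcond_def using a(14) Kid_good[of \<theta> ls h] by auto
  have finK: "finite (Kid q n \<eta> ls h)" and cK: "card (Kid q n \<eta> ls h) = q ^ d"
    using K_props(1,2)[of ls h] by (auto simp: d_def)
  have finK': "finite (Kid q n \<eta> ls mh)" and cK': "card (Kid q n \<eta> ls mh) = q ^ d"
    using K_props(1,2)[of ls mh] card_cyc_mh by (auto simp: d_def)
  have cA: "card Ah = q ^ (d * r)"
    using card_kdim[OF finK Kid_diff a(15) a(17)] cK by (simp add: power_mult)
  have cB: "card Amh = q ^ (d * r)"
    using card_kdim[OF finK' Kid_diff a(16) a(18)] cK' by (simp add: power_mult)
  have qdr: "q ^ (d * r) > 0" using qpos by simp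
  have finA: "finite Ah" using cA qdr card_ge_0_finite by (metis)
  have finB: "finite Amh" using cB qdr card_ge_0_finite by (metis)
  have A0: "0 \<in> Ah" and B0: "0 \<in> Amh" and AJ: "Ah \<subseteq> Jid q t n \<eta> ls h"
    and BJ: "Amh \<subseteq> Jid q t n \<eta> ls mh"
    using a(15,16) by (auto simp: ksubspace_def)
  have gA: "\<And>x. x \<in> Ah \<Longrightarrow> good t lh x" using AJ Jid_good[of _ ls h] by blast
  have gB: "\<And>x. x \<in> Amh \<Longrightarrow> good t (- lh) x" using BJ good_mh by blast
  define P where "P a = {b \<in> Amh. b \<noteq> 0 \<and> bform \<delta> q t n \<gamma> \<theta> (a + b) (a + b) = 0}" for a
  have cP: "card (P a) = q ^ (d * (r - 1)) - 1" if aA: "a \<in> Ah" and an: "a \<noteq> 0" for a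
  proof -
    have ga: "good t lh a" using gA aA .
    have wit: "\<exists>b0\<in>Amh. E (B a b0) lh \<noteq> 0"
    proof -
      have "a \<in> dsum Ah Amh" using aA B0 unfolding dsum_def by force
      then obtain y where y: "y \<in> dsum Ah Amh" "bform \<delta> q t n \<gamma> \<theta> a y \<noteq> 0" using a(20) an by blast
      then obtain a' b' where ab: "y = a' + b'" "a' \<in> Ah" "b' \<in> Amh" unfolding dsum_def by blast
      show ?thesis
      proof (rule ccontr)
        assume "\<not> ?thesis"
        hence "E (B a b') lh = 0" using ab by blast
        hence "bform \<delta> q t n \<gamma> \<theta> a (a' + b') = 0" by (rule nondeg_use[OF ga gA[OF ab(2)] gB[OF ab(3)]])
        thus False using y ab by simp
      qed
    qed
    have r1: "r \<ge> 1" using a(19) by simp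
    have ker: "card {b\<in>Amh. E (B a b) lh = 0} = q ^ (d * (r - 1))"
      using count_a[OF a(16) finB _ r1 ga wit] cB by (simp add: d_def)
    have "P a = {b\<in>Amh. E (B a b) lh = 0} - {0}"
      unfolding P_def using iso_iff[OF ga gB hc] by auto
    moreover have "0 \<in> {b\<in>Amh. E (B a b) lh = 0}" using B0 B_zero_right by (simp add: E_zero)
    moreover have "finite {b\<in>Amh. E (B a b) lh = 0}" using finB by simp
    ultimately show ?thesis using ker by (simp add: card_Diff_singleton)
  qed
  define S where "S = Sigma (Ah - {0}) P"
  have "{a + b | a b. a \<in> Ah \<and> b \<in> Amh \<and> a \<noteq> 0 \<and> b \<noteq> 0 \<and> bform \<delta> q t n \<gamma> \<theta> (a + b) (a + b) = 0}
      = (\<lambda>(a, b). a + b) ` S"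
    unfolding S_def P_def by auto
  moreover have "inj_on (\<lambda>(a, b). a + b) S"
  proof (rule inj_onI, clarify)
    fix a b a' b' assume m: "(a, b) \<in> S" "(a', b') \<in> S" and e: "a + b = a' + b'"
    have "a \<in> Ah" "a' \<in> Ah" "b \<in> Amh" "b' \<in> Amh" using m by (auto simp: S_def P_def)
    thus "a = a' \<and> b = b'" using sum_inj[OF gA gA gB gB e] by blast
  qed
  ultimately have "card {a + b | a b. a \<in> Ah \<and> b \<in> Amh \<and> a \<noteq> 0 \<and> b \<noteq> 0 \<and> bform \<delta> q t n \<gamma> \<theta> (a + b) (a + b) = 0}
      = card S" by (simp add: card_image)
  also have "\<dots> = (\<Sum>a\<in>Ah - {0}. card (P a))"
    unfolding S_def by (rule card_SigmaI) (use finA finB in \<open>auto simp: P_def\<close>)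
  also have "\<dots> = (\<Sum>a\<in>Ah - {0}. q ^ (d * (r - 1)) - 1)" using cP by simp
  also have "\<dots> = (q ^ (d * r) - 1) * (q ^ (d * (r - 1)) - 1)"
    using cA A0 finA by (simp add: card_Diff_singleton)
  finally show ?thesis by (simp add: dd mult.commute)
qed


end
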